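(* Let $\mathcal{A}=(\mathcal{E},\{M_i\}_{i\in\mathcal{O}})$ be a quantum decision model and $1\ge\epsilon,\delta>0$, and let $K^*$ be its Lipschitz constant. (1) $\mathcal{A}$ is $(\epsilon,\delta)$-fair if and only if $\delta\ge K^*\epsilon$. (2) Suppose $\mathcal{A}$ is not $(\epsilon,\delta)$-fair, and let $|\psi\rangle,|\phi\rangle$ be mutually orthogonal unit vectors with $d(\mathcal{A}(\psi),\mathcal{A}(\phi))=K^*D(\psi,\phi)$ (where $\psi=|\psi\rangle\langle\psi|$, $\phi=|\phi\rangle\langle\phi|$; such a pair exists). Then for every $\sigma\in\mathcal{D}(\mathcal{H})$, the pair $(\rho_\psi,\rho_\phi)$ with $\rho_\psi=\epsilon\psi+(1-\epsilon)\sigma$ and $\rho_\phi=\epsilon\phi+(1-\epsilon)\sigma$ is an $(\epsilon,\delta)$-bias pair.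
   Context: $\mathcal{H}$ is a Hilbert space of finite dimension $N$ and $\mathcal{D}(\mathcal{H})$ is the set of density matrices on $\mathcal{H}$. A super-operator $\mathcal{E}$ is a completely positive trace-preserving map $\mathcal{E}(\rho)=\sum_j E_j\rho E_j^\dagger$, $\sum_j E_j^\dagger E_j=I$. A quantum measurement is $\{M_i\}_{i\in\mathcal{O}}$ with $\mathcal{O}$ finite and $\sum_i M_i^\dagger M_i=I$. A quantum decision model $\mathcal{A}=(\mathcal{E},\{M_i\}_{i\in\mathcal{O}})$ maps $\rho\in\mathcal{D}(\mathcal{H})$ to the distribution $\mathcal{A}(\rho)=\{\mathrm{tr}(M_i\mathcal{E}(\rho)M_i^\dagger)\}_{i\in\mathcal{O}}$. $D(\rho,\sigma)=\frac12\mathrm{tr}|\rho-\sigma|$ (trace distance); $d(p,q)=\frac12\sum_i|p_i-q_i|$ (total variation distance). A pair $(\rho,\sigma)$ of states is an $(\epsilon,\delta)$-bias pair if $D(\rho,\sigma)\le\epsilon$ and $d(\mathcal{A}(\rho),\mathcal{A}(\sigma))>\delta$; $\mathcal{A}$ is $(\epsilon,\delta)$-fair if no $(\epsilon,\delta)$-bias pair exists. The Lipschitz constant $K^*$ of $\mathcal{A}$ is the smallest $K\ge 0$ such that $d(\mathcal{A}(\rho),\mathcal{A}(\sigma))\le K\,D(\rho,\sigma)$ for all $\rho,\sigma\in\mathcal{D}(\mathcal{H})$. *)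

theory Defs
  imports "Jordan_Normal_Form.Matrix"
begin

(* Finite-dimensional Hilbert space H = C^N; operators are N x N complex matrices. *)

definition adj :: "complex mat \<Rightarrow> complex mat" where
  "adj A = mat (dim_col A) (dim_row A) (\<lambda>(i,j). cnj (A $$ (j,i)))"

definition mtrace :: "complex mat \<Rightarrow> complex" where
  "mtrace A = (\<Sum>i<dim_row A. A $$ (i,i))"

definition msum :: "nat \<Rightarrow> 'j set \<Rightarrow> ('j \<Rightarrow> complex mat) \<Rightarrow> complex mat" where
  "msum N J f = mat N N (\<lambda>(i,j). \<Sum>k\<in>J. f k $$ (i,j))"

definition inner :: "complex vec \<Rightarrow> complex vec \<Rightarrow> complex" where
  "inner u v = (\<Sum>i<dim_vec u. cnj (u $ i) * v $ i)"

definition hermitian :: "complex mat \<Rightarrow> bool" where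
  "hermitian A \<longleftrightarrow> adj A = A"

definition psd :: "nat \<Rightarrow> complex mat \<Rightarrow> bool" where
  "psd N A \<longleftrightarrow> A \<in> carrier_mat N N \<and> hermitian A \<and>
     (\<forall>v \<in> carrier_vec N. 0 \<le> Re (inner v (A *\<^sub>v v)))"

definition density :: "nat \<Rightarrow> complex mat \<Rightarrow> bool" where
  "density N \<rho> \<longleftrightarrow> psd N \<rho> \<and> mtrace \<rho> = 1"

definition mat_abs :: "nat \<Rightarrow> complex mat \<Rightarrow> complex mat" where
  "mat_abs N A = (THE B. psd N B \<and> B * B = adj A * A)"

definition trace_dist :: "nat \<Rightarrow> complex mat \<Rightarrow> complex mat \<Rightarrow> real" where
  "trace_dist N \<rho> \<sigma> = Re (mtrace (mat_abs N (\<rho> - \<sigma>))) / 2"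

definition tv_dist :: "'o set \<Rightarrow> ('o \<Rightarrow> real) \<Rightarrow> ('o \<Rightarrow> real) \<Rightarrow> real" where
  "tv_dist Out p q = (\<Sum>i\<in>Out. \<bar>p i - q i\<bar>) / 2"

(* Quantum decision model A = (E, {M_i}_{i in Out}); E given by Kraus operators E_j, j in J *)
definition qdm :: "nat \<Rightarrow> 'j set \<Rightarrow> ('j \<Rightarrow> complex mat) \<Rightarrow> 'o set \<Rightarrow> ('o \<Rightarrow> complex mat) \<Rightarrow> bool" where
  "qdm N J E Out M \<longleftrightarrow>
     finite J \<and> (\<forall>j\<in>J. E j \<in> carrier_mat N N) \<and> msum N J (\<lambda>j. adj (E j) * E j) = 1\<^sub>m N \<and>
     finite Out \<and> (\<forall>i\<in>Out. M i \<in> carrier_mat N N) \<and> msum N Out (\<lambda>i. adj (M i) * M i) = 1\<^sub>m N"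

definition superop :: "nat \<Rightarrow> 'j set \<Rightarrow> ('j \<Rightarrow> complex mat) \<Rightarrow> complex mat \<Rightarrow> complex mat" where
  "superop N J E \<rho> = msum N J (\<lambda>j. E j * \<rho> * adj (E j))"

definition qdm_out :: "nat \<Rightarrow> 'j set \<Rightarrow> ('j \<Rightarrow> complex mat) \<Rightarrow> ('o \<Rightarrow> complex mat) \<Rightarrow> complex mat \<Rightarrow> 'o \<Rightarrow> real" where
  "qdm_out N J E M \<rho> i = Re (mtrace (M i * superop N J E \<rho> * adj (M i)))"

definition bias_pair :: "nat \<Rightarrow> 'j set \<Rightarrow> ('j \<Rightarrow> complex mat) \<Rightarrow> 'o set \<Rightarrow> ('o \<Rightarrow> complex mat)
    \<Rightarrow> real \<Rightarrow> real \<Rightarrow> complex mat \<Rightarrow> complex mat \<Rightarrow> bool" where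
  "bias_pair N J E Out M \<epsilon> \<delta> \<rho> \<sigma> \<longleftrightarrow> density N \<rho> \<and> density N \<sigma> \<and>
     trace_dist N \<rho> \<sigma> \<le> \<epsilon> \<and> tv_dist Out (qdm_out N J E M \<rho>) (qdm_out N J E M \<sigma>) > \<delta>"

definition fair :: "nat \<Rightarrow> 'j set \<Rightarrow> ('j \<Rightarrow> complex mat) \<Rightarrow> 'o set \<Rightarrow> ('o \<Rightarrow> complex mat)
    \<Rightarrow> real \<Rightarrow> real \<Rightarrow> bool" where
  "fair N J E Out M \<epsilon> \<delta> \<longleftrightarrow> \<not> (\<exists>\<rho> \<sigma>. bias_pair N J E Out M \<epsilon> \<delta> \<rho> \<sigma>)"

definition lipschitz_const :: "nat \<Rightarrow> 'j set \<Rightarrow> ('j \<Rightarrow> complex mat) \<Rightarrow> 'o set \<Rightarrow> ('o \<Rightarrow> complex mat) \<Rightarrow> real" where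
  "lipschitz_const N J E Out M = (LEAST K. K \<ge> 0 \<and> (\<forall>\<rho> \<sigma>. density N \<rho> \<longrightarrow> density N \<sigma> \<longrightarrow>
      tv_dist Out (qdm_out N J E M \<rho>) (qdm_out N J E M \<sigma>) \<le> K * trace_dist N \<rho> \<sigma>))"

definition proj :: "complex vec \<Rightarrow> complex mat" where
  "proj v = mat (dim_vec v) (dim_vec v) (\<lambda>(i,j). v $ i * cnj (v $ j))"

definition is_unit_vec :: "nat \<Rightarrow> complex vec \<Rightarrow> bool" where
  "is_unit_vec N v \<longleftrightarrow> v \<in> carrier_vec N \<and> inner v v = 1"

end

theory Submission
  imports Defs "Jordan_Normal_Form.Spectral_Radius"
begin


lemma mv_idx: "A \<in> carrier_mat N N \<Longrightarrow> v \<in> carrier_vec N \<Longrightarrow> i < N \<Longrightarrow>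
  (A *\<^sub>v v) $ i = (\<Sum>j<N. A $$ (i,j) * v $ j)"
  by (auto simp: index_mult_mat_vec scalar_prod_def atLeast0LessThan intro!: sum.cong)

lemma mm_idx: "A \<in> carrier_mat N N \<Longrightarrow> B \<in> carrier_mat N N \<Longrightarrow> i < N \<Longrightarrow> j < N \<Longrightarrow>
  (A * B) $$ (i,j) = (\<Sum>k<N. A $$ (i,k) * B $$ (k,j))"
  by (auto simp: index_mult_mat scalar_prod_def atLeast0LessThan intro!: sum.cong)

declare index_mult_mat_vec[simp del] index_mult_mat(1)[simp del] minus_carrier_mat[simp]

lemma adj_carrier[simp]: "A \<in> carrier_mat n m \<Longrightarrow> adj A \<in> carrier_mat m n"
  by (auto simp: adj_def)

lemma adj_dims[simp]: "dim_row (adj A) = dim_col A" "dim_col (adj A) = dim_row A"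
  by (auto simp: adj_def)

lemma adj_idx[simp]: "i < dim_col A \<Longrightarrow> j < dim_row A \<Longrightarrow> adj A $$ (i,j) = cnj (A $$ (j,i))"
  by (auto simp: adj_def)

lemma inner_carrier: "u \<in> carrier_vec N \<Longrightarrow> inner u v = (\<Sum>i<N. cnj (u $ i) * v $ i)"
  by (auto simp: inner_def)

lemma mtrace_carrier: "A \<in> carrier_mat N N \<Longrightarrow> mtrace A = (\<Sum>i<N. A $$ (i,i))"
  by (auto simp: mtrace_def)

lemma msum_carrier[simp]: "msum N J f \<in> carrier_mat N N"
  by (auto simp: msum_def)

lemma msum_idx[simp]: "i < N \<Longrightarrow> j < N \<Longrightarrow> msum N J f $$ (i,j) = (\<Sum>k\<in>J. f k $$ (i,j))"
  by (auto simp: msum_def)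

lemma hermitian_iff: "A \<in> carrier_mat N N \<Longrightarrow> hermitian A \<longleftrightarrow> (\<forall>i<N. \<forall>j<N. cnj (A $$ (j,i)) = A $$ (i,j))"
  unfolding hermitian_def
  by (auto simp: eq_matI) (metis adj_idx carrier_matD(1) carrier_matD(2))+

lemma adj_adj: "adj (adj A) = A"
  by (auto simp: adj_def intro!: eq_matI)

lemma adj_mult: "A \<in> carrier_mat n m \<Longrightarrow> B \<in> carrier_mat m p \<Longrightarrow> adj (A * B) = adj B * adj A"
  apply (rule eq_matI)
    apply (auto simp: adj_def index_mult_mat scalar_prod_def)
  by (simp add: mult.commute)

lemma inner_adj: assumes "A \<in> carrier_mat N N" "u \<in> carrier_vec N" "v \<in> carrier_vec N"
  shows "inner u (A *\<^sub>v v) = inner (adj A *\<^sub>v u) v"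
proof -
  have "inner u (A *\<^sub>v v) = (\<Sum>i<N. \<Sum>j<N. cnj (u $ i) * A $$ (i,j) * v $ j)"
    using assms by (simp add: inner_carrier mv_idx sum_distrib_left mult.assoc)
  also have "\<dots> = (\<Sum>j<N. \<Sum>i<N. cnj (u $ i) * A $$ (i,j) * v $ j)" by (rule sum.swap)
  also have "\<dots> = (\<Sum>j<N. cnj ((adj A *\<^sub>v u) $ j) * v $ j)"
  proof (rule sum.cong[OF refl])
    fix j assume j: "j \<in> {..<N}"
    have c: "adj A \<in> carrier_mat N N" using assms by simp
    have "(adj A *\<^sub>v u) $ j = (\<Sum>i<N. cnj (A $$ (i,j)) * u $ i)"
      using mv_idx[OF c assms(2)] j assms(1) by auto
    then show "(\<Sum>i<N. cnj (u $ i) * A $$ (i, j) * v $ j) = cnj ((adj A *\<^sub>v u) $ j) * v $ j"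
      by (simp add: sum_distrib_left sum_distrib_right cnj_sum mult.commute mult.left_commute)
  qed
  also have "\<dots> = inner (adj A *\<^sub>v u) v"
  proof -
    have "adj A *\<^sub>v u \<in> carrier_vec N" using assms by (metis adj_carrier mult_mat_vec_carrier)
    from inner_carrier[OF this] show ?thesis by simp
  qed
  finally show ?thesis .
qed

lemma inner_swap: "u \<in> carrier_vec N \<Longrightarrow> v \<in> carrier_vec N \<Longrightarrow> inner v u = cnj (inner u v)"
  by (simp add: inner_carrier cnj_sum mult.commute)

lemma inner_lincomb: assumes "w \<in> carrier_vec N" "\<And>k. k < n \<Longrightarrow> f k \<in> carrier_vec N"
  shows "inner w (vec N (\<lambda>i. \<Sum>k<n. a k * f k $ i)) = (\<Sum>k<n. a k * inner w (f k))"
proof -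
  have "inner w (vec N (\<lambda>i. \<Sum>k<n. a k * f k $ i)) = (\<Sum>i<N. \<Sum>k<n. cnj (w $ i) * (a k * f k $ i))"
    using assms by (simp add: inner_carrier sum_distrib_left)
  also have "\<dots> = (\<Sum>k<n. \<Sum>i<N. cnj (w $ i) * (a k * f k $ i))" by (rule sum.swap)
  also have "\<dots> = (\<Sum>k<n. a k * inner w (f k))"
    using assms by (simp add: inner_carrier sum_distrib_left mult.commute mult.left_commute)
  finally show ?thesis .
qed

definition SS :: "nat \<Rightarrow> nat \<Rightarrow> (nat \<Rightarrow> complex vec) \<Rightarrow> (nat \<Rightarrow> complex) \<Rightarrow> complex mat" where
  "SS N n u c = mat N N (\<lambda>(i,j). \<Sum>k<n. c k * (u k $ i) * cnj (u k $ j))"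

definition ortho :: "nat \<Rightarrow> nat \<Rightarrow> (nat \<Rightarrow> complex vec) \<Rightarrow> bool" where
  "ortho N n u \<longleftrightarrow> (\<forall>k<n. u k \<in> carrier_vec N) \<and>
     (\<forall>k<n. \<forall>l<n. inner (u k) (u l) = (if k = l then 1 else 0))"

lemma SS_carrier[simp]: "SS N n u c \<in> carrier_mat N N"
  by (simp add: SS_def)

lemma SS_idx[simp]: "i < N \<Longrightarrow> j < N \<Longrightarrow> SS N n u c $$ (i,j) = (\<Sum>k<n. c k * (u k $ i) * cnj (u k $ j))"
  by (simp add: SS_def)

lemma SS_dims[simp]: "dim_row (SS N n u c) = N" "dim_col (SS N n u c) = N"
  by (simp_all add: SS_def)

lemma SS_mv: assumes "\<And>k. k < n \<Longrightarrow> u k \<in> carrier_vec N" "v \<in> carrier_vec N"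
  shows "SS N n u c *\<^sub>v v = vec N (\<lambda>i. \<Sum>k<n. (c k * inner (u k) v) * u k $ i)"
proof (rule eq_vecI)
  fix i assume "i < dim_vec (vec N (\<lambda>i. \<Sum>k<n. (c k * inner (u k) v) * u k $ i))"
  then have i: "i < N" by simp
  have "(SS N n u c *\<^sub>v v) $ i = (\<Sum>j<N. \<Sum>k<n. c k * (u k $ i) * cnj (u k $ j) * v $ j)"
    using mv_idx[OF SS_carrier assms(2) i] i by (simp add: sum_distrib_right)
  also have "\<dots> = (\<Sum>k<n. \<Sum>j<N. c k * (u k $ i) * cnj (u k $ j) * v $ j)" by (rule sum.swap)
  also have "\<dots> = (\<Sum>k<n. (c k * inner (u k) v) * u k $ i)"
    using assms by (auto simp: inner_carrier[OF assms(1)] sum_distrib_left sum_distrib_right mult.commute mult.left_commute intro!: sum.cong)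
  finally show "(SS N n u c *\<^sub>v v) $ i = vec N (\<lambda>i. \<Sum>k<n. (c k * inner (u k) v) * u k $ i) $ i"
    using i by simp
qed (simp)

lemma orthoD: "ortho N n u \<Longrightarrow> k < n \<Longrightarrow> u k \<in> carrier_vec N"
  "ortho N n u \<Longrightarrow> k < n \<Longrightarrow> l < n \<Longrightarrow> inner (u k) (u l) = (if k = l then 1 else 0)"
  by (auto simp: ortho_def)

lemma sum_if_mult: "(l::nat) < n \<Longrightarrow> (\<Sum>k<n. (if k = l then a else 0) * f k) = a * (f l :: 'a :: comm_ring_1)"
proof -
  assume l: "l < n"
  have "(\<Sum>k<n. (if k = l then a else 0) * f k) = (\<Sum>k<n. if k = l then a * f k else 0)"
    by (rule sum.cong) auto
  also have "\<dots> = a * f l" using l by (simp add: sum.delta)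
  finally show ?thesis .
qed

lemma SS_mv_basis: assumes o: "ortho N n u" and l: "l < n"
  shows "SS N n u c *\<^sub>v u l = c l \<cdot>\<^sub>v u l"
proof -
  have "SS N n u c *\<^sub>v u l = vec N (\<lambda>i. \<Sum>k<n. (c k * inner (u k) (u l)) * u k $ i)"
    by (rule SS_mv, insert o l, auto simp: ortho_def)
  also have "\<dots> = vec N (\<lambda>i. c l * u l $ i)"
    using o l by (simp add: orthoD(2) if_distrib[of "\<lambda>x. c _ * x"] sum_if_mult cong: if_cong)
  also have "\<dots> = c l \<cdot>\<^sub>v u l" using orthoD(1)[OF o l] by (auto intro!: eq_vecI)
  finally show ?thesis .
qed

lemma sum_if_mult2: "(k::nat) < n \<Longrightarrow> (\<Sum>l<n. f l * (if k = l then 1 else 0)) = (f k :: 'a :: comm_ring_1)"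
proof -
  assume k: "k < n"
  have "(\<Sum>l<n. f l * (if k = l then 1 else 0)) = (\<Sum>l<n. if k = l then f l else 0)"
    by (rule sum.cong) auto
  also have "\<dots> = f k" using k by (simp add: sum.delta)
  finally show ?thesis .
qed

lemma SS_mult: assumes o: "ortho N n u"
  shows "SS N n u c * SS N n u d = SS N n u (\<lambda>k. c k * d k)"
proof (rule eq_matI)
  fix i j assume "i < dim_row (SS N n u (\<lambda>k. c k * d k))" "j < dim_col (SS N n u (\<lambda>k. c k * d k))"
  then have i: "i < N" and j: "j < N" by auto
  have "(SS N n u c * SS N n u d) $$ (i,j) = (\<Sum>m<N. (\<Sum>k<n. c k * u k $ i * cnj (u k $ m)) * (\<Sum>l<n. d l * u l $ m * cnj (u l $ j)))"
    using i j by (simp add: mm_idx[OF SS_carrier SS_carrier])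
  also have "\<dots> = (\<Sum>m<N. \<Sum>k<n. \<Sum>l<n. (c k * d l * u k $ i * cnj (u l $ j)) * (cnj (u k $ m) * u l $ m))"
    by (simp add: sum_product mult_ac)
  also have "\<dots> = (\<Sum>k<n. \<Sum>l<n. \<Sum>m<N. (c k * d l * u k $ i * cnj (u l $ j)) * (cnj (u k $ m) * u l $ m))"
    by (subst sum.swap, rule sum.cong[OF refl], rule sum.swap)
  also have "\<dots> = (\<Sum>k<n. \<Sum>l<n. (c k * d l * u k $ i * cnj (u l $ j)) * inner (u k) (u l))"
    by (intro sum.cong refl) (simp add: inner_carrier[OF orthoD(1)[OF o]] sum_distrib_left)
  also have "\<dots> = (\<Sum>k<n. c k * d k * u k $ i * cnj (u k $ j))"
    by (intro sum.cong refl) (simp add: orthoD(2)[OF o] sum_if_mult2)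
  finally show "(SS N n u c * SS N n u d) $$ (i,j) = SS N n u (\<lambda>k. c k * d k) $$ (i,j)"
    using i j by simp
qed auto

lemma adj_SS: "adj (SS N n u c) = SS N n u (\<lambda>k. cnj (c k))"
  by (rule eq_matI) (auto simp: cnj_sum mult_ac)

lemma SS_hermitian: "hermitian (SS N n u (\<lambda>k. complex_of_real (r k)))"
  unfolding hermitian_def adj_SS by simp

lemma inner_SS: assumes "\<And>k. k < n \<Longrightarrow> u k \<in> carrier_vec N" "v \<in> carrier_vec N"
  shows "inner v (SS N n u c *\<^sub>v v) = (\<Sum>k<n. c k * complex_of_real ((cmod (inner (u k) v))\<^sup>2))"
proof -
  have "inner v (SS N n u c *\<^sub>v v) = (\<Sum>k<n. (c k * inner (u k) v) * inner v (u k))"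
  proof -
    have "inner v (vec N (\<lambda>i. \<Sum>k<n. (c k * inner (u k) v) * u k $ i)) = (\<Sum>k<n. (c k * inner (u k) v) * inner v (u k))"
      by (rule inner_lincomb) (use assms in auto)
    then show ?thesis using SS_mv[OF assms] by simp
  qed
  also have "\<dots> = (\<Sum>k<n. c k * complex_of_real ((cmod (inner (u k) v))\<^sup>2))"
  proof (intro sum.cong refl)
    fix k assume "k \<in> {..<n}"
    then have k: "k < n" by simp
    show "c k * inner (u k) v * inner v (u k) = c k * complex_of_real ((cmod (inner (u k) v))\<^sup>2)"
      by (simp only: inner_swap[OF assms(1)[OF k] assms(2)] complex_norm_square mult.assoc)
  qed
  finally show ?thesis .
qed

lemma SS_psd: assumes "\<And>k. k < n \<Longrightarrow> u k \<in> carrier_vec N" "\<And>k. k < n \<Longrightarrow> r k \<ge> 0"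
  shows "psd N (SS N n u (\<lambda>k. complex_of_real (r k)))"
  unfolding psd_def
proof (intro conjI ballI)
  fix v :: "complex vec" assume v: "v \<in> carrier_vec N"
  show "0 \<le> Re (inner v (SS N n u (\<lambda>k. complex_of_real (r k)) *\<^sub>v v))"
  proof -
    have "Re (inner v (SS N n u (\<lambda>k. complex_of_real (r k)) *\<^sub>v v)) = (\<Sum>k<n. r k * (cmod (inner (u k) v))\<^sup>2)"
      using inner_SS[OF assms(1) v, where c="\<lambda>k. complex_of_real (r k)"] by (simp add: Re_sum)
    also have "\<dots> \<ge> 0" using assms(2) by (auto intro!: sum_nonneg)
    finally show ?thesis .
  qed
qed (auto simp: SS_hermitian)

lemma mtrace_SS: assumes o: "ortho N n u" shows "mtrace (SS N n u c) = (\<Sum>k<n. c k)"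
proof -
  have "mtrace (SS N n u c) = (\<Sum>i<N. \<Sum>k<n. c k * u k $ i * cnj (u k $ i))"
    by (simp add: mtrace_carrier[OF SS_carrier])
  also have "\<dots> = (\<Sum>k<n. \<Sum>i<N. c k * u k $ i * cnj (u k $ i))" by (rule sum.swap)
  also have "\<dots> = (\<Sum>k<n. c k * inner (u k) (u k))"
    by (intro sum.cong refl) (simp add: inner_carrier[OF orthoD(1)[OF o]] sum_distrib_left mult_ac)
  also have "\<dots> = (\<Sum>k<n. c k)" by (intro sum.cong refl) (simp add: orthoD(2)[OF o])
  finally show ?thesis .
qed

lemma mtrace_mult_SS: assumes X: "X \<in> carrier_mat N N" and u: "\<And>k. k < n \<Longrightarrow> u k \<in> carrier_vec N"
  shows "mtrace (X * SS N n u c) = (\<Sum>k<n. c k * inner (u k) (X *\<^sub>v u k))"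
proof -
  have "mtrace (X * SS N n u c) = (\<Sum>i<N. \<Sum>m<N. \<Sum>k<n. X $$ (i,m) * (c k * u k $ m * cnj (u k $ i)))"
    using X by (simp add: mtrace_carrier[of _ N] mm_idx sum_distrib_left)
  also have "\<dots> = (\<Sum>k<n. \<Sum>i<N. \<Sum>m<N. X $$ (i,m) * (c k * u k $ m * cnj (u k $ i)))"
    by (subst sum.swap, rule sum.cong[OF refl], rule sum.swap)
  also have "\<dots> = (\<Sum>k<n. c k * inner (u k) (X *\<^sub>v u k))"
    by (intro sum.cong refl) (simp add: inner_carrier[OF u] mv_idx[OF X u] sum_distrib_left mult_ac)
  finally show ?thesis .
qed

lemma ortho_complete: assumes o: "ortho N N u" shows "SS N N u (\<lambda>_. 1) = 1\<^sub>m N"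
proof -
  define U where "U = mat N N (\<lambda>(i,k). u k $ i)"
  have U: "U \<in> carrier_mat N N" by (simp add: U_def)
  have "adj U * U = 1\<^sub>m N"
  proof (rule eq_matI)
    fix k l assume "k < dim_row (1\<^sub>m N)" "l < dim_col (1\<^sub>m N)"
    then have k: "k < N" and l: "l < N" by auto
    have "(adj U * U) $$ (k,l) = (\<Sum>m<N. adj U $$ (k,m) * U $$ (m,l))"
      using k l by (rule mm_idx[OF adj_carrier[OF U] U])
    also have "\<dots> = inner (u k) (u l)" using k l by (simp add: U_def inner_carrier[OF orthoD(1)[OF o k]])
    finally have "(adj U * U) $$ (k,l) = inner (u k) (u l)" .
    then show "(adj U * U) $$ (k,l) = 1\<^sub>m N $$ (k,l)" using k l by (simp add: orthoD(2)[OF o])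
  qed (use U in auto)
  then have UU: "U * adj U = 1\<^sub>m N" by (rule mat_mult_left_right_inverse[OF adj_carrier[OF U] U])
  have "SS N N u (\<lambda>_. 1) = U * adj U"
  proof (rule eq_matI)
    fix i j assume "i < dim_row (U * adj U)" "j < dim_col (U * adj U)"
    then have i: "i < N" and j: "j < N" using U by auto
    have "(U * adj U) $$ (i,j) = (\<Sum>m<N. U $$ (i,m) * adj U $$ (m,j))"
      using i j by (rule mm_idx[OF U adj_carrier[OF U]])
    also have "\<dots> = SS N N u (\<lambda>_. 1) $$ (i,j)" using i j by (simp add: U_def)
    finally show "SS N N u (\<lambda>_. 1) $$ (i,j) = (U * adj U) $$ (i,j)" by simp
  qed (use U in auto)
  then show ?thesis using UU by simp
qed

lemma inner_diff: "w \<in> carrier_vec N \<Longrightarrow> x \<in> carrier_vec N \<Longrightarrow> y \<in> carrier_vec N \<Longrightarrow>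
  inner w (x - y) = inner w x - inner w y"
  by (simp add: inner_carrier sum_subtractf right_diff_distrib)

lemma inner_add: "w \<in> carrier_vec N \<Longrightarrow> x \<in> carrier_vec N \<Longrightarrow> y \<in> carrier_vec N \<Longrightarrow>
  inner w (x + y) = inner w x + inner w y"
  by (simp add: inner_carrier sum.distrib distrib_left)

lemma inner_smult_r: "w \<in> carrier_vec N \<Longrightarrow> x \<in> carrier_vec N \<Longrightarrow> inner w (s \<cdot>\<^sub>v x) = s * inner w x"
  by (simp add: inner_carrier sum_distrib_left mult_ac)

lemma inner_smult_l: "w \<in> carrier_vec N \<Longrightarrow> x \<in> carrier_vec N \<Longrightarrow> inner (s \<cdot>\<^sub>v w) x = cnj s * inner w x"
proof -
  assume a: "w \<in> carrier_vec N" "x \<in> carrier_vec N"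
  then have "s \<cdot>\<^sub>v w \<in> carrier_vec N" by simp
  then show ?thesis using a by (simp add: inner_carrier sum_distrib_left mult_ac)
qed

lemma inner_zero_r: "w \<in> carrier_vec N \<Longrightarrow> inner w (0\<^sub>v N) = 0"
  by (simp add: inner_carrier)

lemma inner_unit: "w \<in> carrier_vec N \<Longrightarrow> j < N \<Longrightarrow> inner w (unit_vec N j) = cnj (w $ j)"
proof -
  assume w: "w \<in> carrier_vec N" and j: "j < N"
  have "inner w (unit_vec N j) = (\<Sum>i<N. if i = j then cnj (w $ j) else 0)"
    unfolding inner_carrier[OF w] by (intro sum.cong refl) (auto simp: unit_vec_def)
  also have "\<dots> = cnj (w $ j)" using j by simp
  finally show ?thesis .
qed

lemma inner_self: assumes r: "r \<in> carrier_vec N"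
  shows "inner r r = complex_of_real (\<Sum>i<N. (cmod (r $ i))\<^sup>2)"
proof -
  have "inner r r = (\<Sum>i<N. complex_of_real ((cmod (r $ i))\<^sup>2))"
    unfolding inner_carrier[OF r] by (intro sum.cong refl) (simp only: complex_norm_square mult.commute)
  then show ?thesis by (simp only: of_real_sum)
qed

lemma inner_self_pos: assumes r: "r \<in> carrier_vec N" and nz: "r \<noteq> 0\<^sub>v N"
  shows "(\<Sum>i<N. (cmod (r $ i))\<^sup>2) > 0"
proof -
  from nz r obtain i where i: "i < N" and ri: "r $ i \<noteq> 0"
    by (metis carrier_vecD eq_vecI index_zero_vec(1) index_zero_vec(2))
  have "(cmod (r $ i))\<^sup>2 > 0" using ri by simp
  also have "(cmod (r $ i))\<^sup>2 \<le> (\<Sum>i<N. (cmod (r $ i))\<^sup>2)"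
    by (rule member_le_sum) (use i in auto)
  finally show ?thesis .
qed

lemma normalize_ex: assumes r: "r \<in> carrier_vec N" and nz: "r \<noteq> 0\<^sub>v N"
  shows "\<exists>s. s \<noteq> 0 \<and> inner (s \<cdot>\<^sub>v r) (s \<cdot>\<^sub>v r) = 1"
proof -
  define q where "q = (\<Sum>i<N. (cmod (r $ i))\<^sup>2)"
  have q: "q > 0" unfolding q_def by (rule inner_self_pos[OF r nz])
  define s where "s = complex_of_real (1 / sqrt q)"
  have "inner (s \<cdot>\<^sub>v r) (s \<cdot>\<^sub>v r) = cnj s * s * inner r r"
    using r by (simp add: inner_smult_l inner_smult_r)
  also have "\<dots> = complex_of_real ((1 / sqrt q) * (1 / sqrt q) * q)"
    unfolding inner_self[OF r] q_def[symmetric] s_def by (simp only: complex_cnj_complex_of_real of_real_mult)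
  also have "\<dots> = 1"
  proof -
    have h: "sqrt q * sqrt q = q" using q by simp
    have "(1 / sqrt q) * (1 / sqrt q) * q = q / (sqrt q * sqrt q)" by simp
    also have "\<dots> = 1" using h q by simp
    finally show ?thesis by simp
  qed
  finally show ?thesis using q by (intro exI[of _ s]) (simp add: s_def)
qed

lemma ortho_ext: assumes o: "ortho N k u" and k: "k < N"
  shows "\<exists>w. w \<in> carrier_vec N \<and> inner w w = 1 \<and> (\<forall>i<k. inner (u i) w = 0)"
proof -
  define r where "r j = unit_vec N j - vec N (\<lambda>a. \<Sum>i<k. cnj (u i $ j) * u i $ a)" for j
  have rc: "r j \<in> carrier_vec N" for j by (simp add: r_def)
  have rperp: "inner (u l) (r j) = 0" if l: "l < k" and j: "j < N" for l j
  proof -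
    have ul: "u l \<in> carrier_vec N" using orthoD(1)[OF o l] .
    have "inner (u l) (vec N (\<lambda>a. \<Sum>i<k. cnj (u i $ j) * u i $ a)) = (\<Sum>i<k. cnj (u i $ j) * inner (u l) (u i))"
      by (rule inner_lincomb[OF ul]) (use o in \<open>auto simp: ortho_def\<close>)
    also have "\<dots> = cnj (u l $ j)"
      using l by (simp add: orthoD(2)[OF o] if_distrib[of "\<lambda>x. _ * x"] sum.delta cong: if_cong)
    finally show ?thesis unfolding r_def using ul j
      by (simp add: inner_diff[OF ul] inner_unit)
  qed
  have "\<exists>j<N. r j \<noteq> 0\<^sub>v N"
  proof (rule ccontr)
    assume "\<not> (\<exists>j<N. r j \<noteq> 0\<^sub>v N)"
    then have z: "\<And>j. j < N \<Longrightarrow> r j = 0\<^sub>v N" by auto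
    have diag: "(\<Sum>i<k. cnj (u i $ j) * u i $ j) = 1" if j: "j < N" for j
    proof -
      have "r j $ j = 0" using z[OF j] j by simp
      then show ?thesis using j by (simp add: r_def)
    qed
    have "(of_nat N :: complex) = (\<Sum>j<N. \<Sum>i<k. cnj (u i $ j) * u i $ j)"
      using diag by simp
    also have "\<dots> = (\<Sum>i<k. \<Sum>j<N. cnj (u i $ j) * u i $ j)" by (rule sum.swap)
    also have "\<dots> = (\<Sum>i<k. inner (u i) (u i))"
      by (intro sum.cong refl) (simp add: inner_carrier[OF orthoD(1)[OF o]])
    also have "\<dots> = of_nat k" by (simp add: orthoD(2)[OF o])
    finally have "N = k" by simp
    then show False using k by simp
  qed
  then obtain j where j: "j < N" and nz: "r j \<noteq> 0\<^sub>v N" by auto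
  obtain s where s: "inner (s \<cdot>\<^sub>v r j) (s \<cdot>\<^sub>v r j) = 1" using normalize_ex[OF rc nz] by auto
  show ?thesis
    by (rule exI[of _ "s \<cdot>\<^sub>v r j"])
       (use s rc rperp j o in \<open>auto simp: inner_smult_r[OF orthoD(1)[OF o]]\<close>)
qed

lemma ortho_upd: assumes o: "ortho N k u" and w: "w \<in> carrier_vec N" "inner w w = 1"
  "\<forall>i<k. inner (u i) w = 0"
  shows "ortho N (Suc k) (u(k := w))"
  unfolding ortho_def
proof (intro conjI allI impI)
  fix i assume "i < Suc k" then show "(u(k := w)) i \<in> carrier_vec N" using w o by (auto simp: ortho_def)
next
  fix i l assume i: "i < Suc k" and l: "l < Suc k"
  show "inner ((u(k := w)) i) ((u(k := w)) l) = (if i = l then 1 else 0)"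
  proof (cases "i = k")
    case True
    then show ?thesis
    proof (cases "l = k")
      case False
      then have "l < k" using l by simp
      then show ?thesis using True False w inner_swap[OF w(1) orthoD(1)[OF o \<open>l < k\<close>]] by auto
    qed (use w in auto)
  next
    case False
    then have "i < k" using i by simp
    then show ?thesis using False w o l by (cases "l = k") (auto simp: orthoD)
  qed
qed

lemma ortho_extend: assumes "ortho N k u" "k \<le> N"
  shows "\<exists>w. ortho N N w \<and> (\<forall>i<k. w i = u i)"
  using assms
proof (induction "N - k" arbitrary: k u)
  case 0
  then have "k = N" by simp
  then show ?case using 0 by auto
next
  case (Suc d)
  then have k: "k < N" by simp
  obtain v where v: "v \<in> carrier_vec N" "inner v v = 1" "\<forall>i<k. inner (u i) v = 0"
    using ortho_ext[OF Suc(3) k] by auto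
  have o: "ortho N (Suc k) (u(k := v))" by (rule ortho_upd[OF Suc(3) v])
  have "\<exists>w. ortho N N w \<and> (\<forall>i<Suc k. w i = (u(k := v)) i)"
    by (rule Suc(1)[of "Suc k" "u(k := v)", OF _ o]) (use Suc(2) k in auto)
  then obtain w where w: "ortho N N w" "\<forall>i<Suc k. w i = (u(k := v)) i" by blast
  then show ?case by (intro exI[of _ w]) auto
qed

lemma ortho_expand: assumes o: "ortho N N w" and y: "y \<in> carrier_vec N"
  shows "y = vec N (\<lambda>r. \<Sum>i<N. inner (w i) y * w i $ r)"
proof -
  have "y = 1\<^sub>m N *\<^sub>v y" using y by simp
  also have "\<dots> = SS N N w (\<lambda>_. 1) *\<^sub>v y" by (simp add: ortho_complete[OF o])
  also have "\<dots> = vec N (\<lambda>r. \<Sum>i<N. inner (w i) y * w i $ r)"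
    by (subst SS_mv) (use o y in \<open>auto simp: ortho_def\<close>)
  finally show ?thesis .
qed

lemma ortho_ext_eq: assumes o: "ortho N N w" and y: "y \<in> carrier_vec N" and z: "z \<in> carrier_vec N"
  and eq: "\<And>i. i < N \<Longrightarrow> inner (w i) y = inner (w i) z"
  shows "y = z"
  using ortho_expand[OF o y] ortho_expand[OF o z] eq by simp

lemma hermitian_adj: "hermitian A \<Longrightarrow> adj A = A" by (simp add: hermitian_def)

lemma eig_step: assumes A: "A \<in> carrier_mat N N" and h: "hermitian A" and o: "ortho N k u" and k: "k < N"
  and ev: "\<forall>i<k. \<exists>c. A *\<^sub>v u i = c \<cdot>\<^sub>v u i"
  shows "\<exists>v c. v \<in> carrier_vec N \<and> inner v v = 1 \<and> (\<forall>i<k. inner (u i) v = 0) \<and> A *\<^sub>v v = c \<cdot>\<^sub>v v"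
proof -
  obtain w where w: "ortho N N w" and wu: "\<forall>i<k. w i = u i"
    using ortho_extend[OF o] k by auto
  have wc: "\<And>i. i < N \<Longrightarrow> w i \<in> carrier_vec N" using w by (simp add: ortho_def)
  define C where "C = mat (N-k) (N-k) (\<lambda>(a,b). inner (w (k+a)) (A *\<^sub>v w (k+b)))"
  have C: "C \<in> carrier_mat (N-k) (N-k)" by (simp add: C_def)
  obtain \<mu> where "\<mu> \<in> spectrum C" using spectrum_non_empty[OF C] k by auto
  then obtain x where x: "eigenvector C x \<mu>" by (auto simp: spectrum_def eigenvalue_def)
  then have xc: "x \<in> carrier_vec (N-k)" and xnz: "x \<noteq> 0\<^sub>v (N-k)" and Cx: "C *\<^sub>v x = \<mu> \<cdot>\<^sub>v x"
    using C by (auto simp: eigenvector_def)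
  define v0 where "v0 = vec N (\<lambda>r. \<Sum>b<N-k. x $ b * w (k+b) $ r)"
  have v0c: "v0 \<in> carrier_vec N" by (simp add: v0_def)
  have lin: "inner y v0 = (\<Sum>b<N-k. x $ b * inner y (w (k+b)))" if y: "y \<in> carrier_vec N" for y
    unfolding v0_def by (rule inner_lincomb[OF y]) (use wc in auto)
  have coef: "inner (w i) v0 = (if i < k then 0 else x $ (i - k))" if i: "i < N" for i
  proof -
    have "inner (w i) v0 = (\<Sum>b<N-k. x $ b * (if i = k + b then 1 else 0))"
      using lin[OF wc[OF i]] i by (simp add: orthoD(2)[OF w])
    also have "\<dots> = (if i < k then 0 else x $ (i - k))"
    proof (cases "i < k")
      case True
      then show ?thesis by simp
    next
      case False
      then have "i - k < N - k" "i = k + (i - k)" using i by auto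
      have "(\<Sum>b<N-k. x $ b * (if i = k + b then 1 else 0)) = (\<Sum>b<N-k. x $ b * (if i - k = b then 1 else 0))"
        by (intro sum.cong refl) (use False in auto)
      also have "\<dots> = x $ (i - k)" by (rule sum_if_mult2) fact
      finally show ?thesis using False by simp
    qed
    finally show ?thesis .
  qed
  have Acoef: "inner (w i) (A *\<^sub>v v0) = \<mu> * inner (w i) v0" if i: "i < N" for i
  proof (cases "i < k")
    case True
    then obtain c where c: "A *\<^sub>v u i = c \<cdot>\<^sub>v u i" using ev by auto
    have ui: "u i \<in> carrier_vec N" using orthoD(1)[OF o True] .
    have "inner (w i) (A *\<^sub>v v0) = inner (A *\<^sub>v u i) v0"
      using inner_adj[OF A wc[OF i] v0c] hermitian_adj[OF h] wu True by simp
    also have "\<dots> = cnj c * inner (u i) v0" using c ui v0c by (simp add: inner_smult_l)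
    also have "\<dots> = 0" using coef[OF i] wu True by simp
    finally show ?thesis using coef[OF i] True by simp
  next
    case False
    define a where "a = i - k"
    have a: "a < N - k" "i = k + a" using i False by (auto simp: a_def)
    have Awc: "A *\<^sub>v w i \<in> carrier_vec N" using A wc[OF i] by simp
    have "inner (w i) (A *\<^sub>v v0) = inner (A *\<^sub>v w i) v0"
      using inner_adj[OF A wc[OF i] v0c] hermitian_adj[OF h] by simp
    also have "\<dots> = (\<Sum>b<N-k. x $ b * inner (A *\<^sub>v w i) (w (k+b)))" by (rule lin[OF Awc])
    also have "\<dots> = (\<Sum>b<N-k. C $$ (a,b) * x $ b)"
    proof (intro sum.cong refl)
      fix b assume "b \<in> {..<N-k}"
      then have b: "b < N - k" by simp
      have "inner (A *\<^sub>v w i) (w (k+b)) = inner (w i) (A *\<^sub>v w (k+b))"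
        using inner_adj[OF A wc[OF i] wc, of "k+b"] hermitian_adj[OF h] b by simp
      then show "x $ b * inner (A *\<^sub>v w i) (w (k+b)) = C $$ (a,b) * x $ b"
        using a b by (simp add: C_def)
    qed
    also have "\<dots> = (C *\<^sub>v x) $ a" using mv_idx[OF C xc a(1)] by simp
    also have "\<dots> = \<mu> * x $ a" using Cx a xc by simp
    finally show ?thesis using coef[OF i] False a_def by simp
  qed
  have Av0: "A *\<^sub>v v0 = \<mu> \<cdot>\<^sub>v v0"
  proof (rule ortho_ext_eq[OF w])
    show "A *\<^sub>v v0 \<in> carrier_vec N" using A v0c by simp
    show "\<mu> \<cdot>\<^sub>v v0 \<in> carrier_vec N" using v0c by simp
    fix i assume i: "i < N"
    show "inner (w i) (A *\<^sub>v v0) = inner (w i) (\<mu> \<cdot>\<^sub>v v0)"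
      using Acoef[OF i] inner_smult_r[OF wc[OF i] v0c] by simp
  qed
  have v0nz: "v0 \<noteq> 0\<^sub>v N"
  proof
    assume z: "v0 = 0\<^sub>v N"
    from xnz xc obtain a where a: "a < N - k" and xa: "x $ a \<noteq> 0"
      by (metis carrier_vecD eq_vecI index_zero_vec(1) index_zero_vec(2))
    have "inner (w (k+a)) v0 = x $ a" using coef[of "k+a"] a by simp
    moreover have "inner (w (k+a)) v0 = 0" using z inner_zero_r[OF wc] a by simp
    ultimately show False using xa by simp
  qed
  obtain s where s: "s \<noteq> 0" "inner (s \<cdot>\<^sub>v v0) (s \<cdot>\<^sub>v v0) = 1" using normalize_ex[OF v0c v0nz] by auto
  show ?thesis
  proof (intro exI conjI allI impI)
    show "s \<cdot>\<^sub>v v0 \<in> carrier_vec N" using v0c by simp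
    show "inner (s \<cdot>\<^sub>v v0) (s \<cdot>\<^sub>v v0) = 1" by (rule s(2))
    fix i assume i: "i < k"
    show "inner (u i) (s \<cdot>\<^sub>v v0) = 0"
      using inner_smult_r[OF orthoD(1)[OF o i] v0c] coef[of i] wu i k by simp
  next
    have "A *\<^sub>v (s \<cdot>\<^sub>v v0) = s \<cdot>\<^sub>v (A *\<^sub>v v0)" using A v0c by (rule mult_mat_vec)
    also have "\<dots> = s \<cdot>\<^sub>v (\<mu> \<cdot>\<^sub>v v0)" using Av0 by simp
    also have "\<dots> = \<mu> \<cdot>\<^sub>v (s \<cdot>\<^sub>v v0)" by (simp add: smult_smult_assoc mult.commute)
    finally show "A *\<^sub>v (s \<cdot>\<^sub>v v0) = \<mu> \<cdot>\<^sub>v (s \<cdot>\<^sub>v v0)" .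
  qed
qed

lemma spectral_partial: assumes A: "A \<in> carrier_mat N N" and h: "hermitian A"
  shows "k \<le> N \<Longrightarrow> \<exists>u. ortho N k u \<and> (\<forall>i<k. \<exists>c. A *\<^sub>v u i = c \<cdot>\<^sub>v u i)"
proof (induction k)
  case 0
  show ?case by (intro exI[of _ "\<lambda>_. 0\<^sub>v N"]) (simp add: ortho_def)
next
  case (Suc k)
  then obtain u where u: "ortho N k u" "\<forall>i<k. \<exists>c. A *\<^sub>v u i = c \<cdot>\<^sub>v u i" by auto
  obtain v c where v: "v \<in> carrier_vec N" "inner v v = 1" "\<forall>i<k. inner (u i) v = 0" "A *\<^sub>v v = c \<cdot>\<^sub>v v"
    using eig_step[OF A h u(1) _ u(2)] Suc(2) by auto
  show ?case
  proof (intro exI conjI)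
    show "ortho N (Suc k) (u(k := v))" by (rule ortho_upd[OF u(1) v(1-3)])
    show "\<forall>i<Suc k. \<exists>c. A *\<^sub>v (u(k := v)) i = c \<cdot>\<^sub>v (u(k := v)) i"
      using u(2) v(4) by (auto simp: less_Suc_eq)
  qed
qed

lemma mult_SS_idx: assumes X: "X \<in> carrier_mat N N" and u: "\<And>k. k < n \<Longrightarrow> u k \<in> carrier_vec N"
  and i: "i < N" and j: "j < N"
  shows "(X * SS N n u c) $$ (i,j) = (\<Sum>k<n. c k * (X *\<^sub>v u k) $ i * cnj (u k $ j))"
proof -
  have "(X * SS N n u c) $$ (i,j) = (\<Sum>m<N. \<Sum>k<n. X $$ (i,m) * (c k * u k $ m * cnj (u k $ j)))"
    using X i j by (simp add: mm_idx sum_distrib_left)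
  also have "\<dots> = (\<Sum>k<n. \<Sum>m<N. X $$ (i,m) * (c k * u k $ m * cnj (u k $ j)))" by (rule sum.swap)
  also have "\<dots> = (\<Sum>k<n. c k * (X *\<^sub>v u k) $ i * cnj (u k $ j))"
  proof (intro sum.cong refl)
    fix k assume "k \<in> {..<n}"
    then have k: "k < n" by simp
    show "(\<Sum>m<N. X $$ (i,m) * (c k * u k $ m * cnj (u k $ j))) = c k * (X *\<^sub>v u k) $ i * cnj (u k $ j)"
      by (simp add: mv_idx[OF X u[OF k] i] sum_distrib_left sum_distrib_right mult_ac)
  qed
  finally show ?thesis .
qed

lemma spectral: assumes A: "A \<in> carrier_mat N N" and h: "hermitian A"
  shows "\<exists>u lam. ortho N N u \<and> A = SS N N u (\<lambda>k. complex_of_real (lam k))"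
proof -
  obtain u where o: "ortho N N u" and e: "\<forall>i<N. \<exists>c. A *\<^sub>v u i = c \<cdot>\<^sub>v u i"
    using spectral_partial[OF A h, of N] by auto
  from e obtain c where c: "\<And>i. i < N \<Longrightarrow> A *\<^sub>v u i = c i \<cdot>\<^sub>v u i" by metis
  have uc: "\<And>i. i < N \<Longrightarrow> u i \<in> carrier_vec N" using o by (simp add: ortho_def)
  have real: "c i = complex_of_real (Re (c i))" if i: "i < N" for i
  proof -
    have "inner (u i) (A *\<^sub>v u i) = c i" using c[OF i] inner_smult_r[OF uc[OF i] uc[OF i]] orthoD(2)[OF o i i] by simp
    moreover have "inner (u i) (A *\<^sub>v u i) = cnj (c i)"
      using inner_adj[OF A uc[OF i] uc[OF i]] hermitian_adj[OF h] c[OF i] inner_smult_l[OF uc[OF i] uc[OF i]]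
        orthoD(2)[OF o i i] by simp
    ultimately have "c i = cnj (c i)" by simp
    then show ?thesis by (simp add: complex_eq_iff)
  qed
  have "A = SS N N u (\<lambda>k. complex_of_real (Re (c k)))"
  proof (rule eq_matI)
    fix i j assume "i < dim_row (SS N N u (\<lambda>k. complex_of_real (Re (c k))))"
      "j < dim_col (SS N N u (\<lambda>k. complex_of_real (Re (c k))))"
    then have i: "i < N" and j: "j < N" by auto
    have "A $$ (i,j) = (A * SS N N u (\<lambda>_. 1)) $$ (i,j)" using A i j by (simp add: ortho_complete[OF o])
    also have "\<dots> = (\<Sum>k<N. 1 * (A *\<^sub>v u k) $ i * cnj (u k $ j))" by (rule mult_SS_idx[OF A uc i j])
    also have "\<dots> = SS N N u (\<lambda>k. complex_of_real (Re (c k))) $$ (i,j)"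
    proof -
      have "\<And>k. k < N \<Longrightarrow> 1 * (A *\<^sub>v u k) $ i * cnj (u k $ j) = complex_of_real (Re (c k)) * u k $ i * cnj (u k $ j)"
      proof -
        fix k assume k: "k < N"
        have "dim_vec (u k) = N" using uc[OF k] by simp
        then show "1 * (A *\<^sub>v u k) $ i * cnj (u k $ j) = complex_of_real (Re (c k)) * u k $ i * cnj (u k $ j)"
          using c[OF k] i real[OF k] by simp
      qed
      then show ?thesis using i j by (auto intro!: sum.cong)
    qed
    finally show "A $$ (i,j) = SS N N u (\<lambda>k. complex_of_real (Re (c k))) $$ (i,j)" .
  qed (use A in auto)
  then show ?thesis using o by (intro exI[of _ u] exI[of _ "\<lambda>k. Re (c k)"]) simp
qed

lemma inner_diff_l: "x \<in> carrier_vec N \<Longrightarrow> y \<in> carrier_vec N \<Longrightarrow> w \<in> carrier_vec N \<Longrightarrow>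
  inner (x - y) w = inner x w - inner y w"
proof -
  assume a: "x \<in> carrier_vec N" "y \<in> carrier_vec N" "w \<in> carrier_vec N"
  then have "x - y \<in> carrier_vec N" by simp
  then show ?thesis using a by (simp add: inner_carrier[OF \<open>x - y \<in> carrier_vec N\<close>] inner_carrier[OF a(1)] inner_carrier[OF a(2)] sum_subtractf left_diff_distrib)
qed

lemma herm_inner_real: assumes A: "A \<in> carrier_mat N N" and h: "hermitian A" and w: "w \<in> carrier_vec N"
  shows "inner w (A *\<^sub>v w) = complex_of_real (Re (inner w (A *\<^sub>v w)))"
proof -
  have "inner w (A *\<^sub>v w) = inner (A *\<^sub>v w) w" using inner_adj[OF A w w] hermitian_adj[OF h] by simp
  also have "\<dots> = cnj (inner w (A *\<^sub>v w))" using inner_swap[OF w, of "A *\<^sub>v w"] A w by simp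
  finally show ?thesis by (simp add: complex_eq_iff)
qed

lemma psdD: assumes "psd N B" shows "B \<in> carrier_mat N N" "hermitian B"
  "\<And>v. v \<in> carrier_vec N \<Longrightarrow> 0 \<le> Re (inner v (B *\<^sub>v v))"
  using assms by (auto simp: psd_def)

lemma psd_zero: assumes p: "psd N B" and w: "w \<in> carrier_vec N" and z: "inner w (B *\<^sub>v w) = 0"
  shows "B *\<^sub>v w = 0\<^sub>v N"
proof -
  note B = psdD[OF p]
  obtain z lam where o: "ortho N N z" and Bs: "B = SS N N z (\<lambda>k. complex_of_real (lam k))"
    using spectral[OF B(1) B(2)] by auto
  have zc: "\<And>k. k < N \<Longrightarrow> z k \<in> carrier_vec N" using o by (simp add: ortho_def)
  have lam: "lam k \<ge> 0" if k: "k < N" for k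
  proof -
    have "inner (z k) (B *\<^sub>v z k) = complex_of_real (lam k)"
      using SS_mv_basis[OF o k, of "\<lambda>k. complex_of_real (lam k)"] inner_smult_r[OF zc[OF k] zc[OF k]]
        orthoD(2)[OF o k k] Bs by simp
    then show ?thesis using B(3)[OF zc[OF k]] by simp
  qed
  have "0 = Re (inner w (B *\<^sub>v w))" using z by simp
  also have "\<dots> = (\<Sum>k<N. lam k * (cmod (inner (z k) w))\<^sup>2)"
    using inner_SS[OF zc w, where c="\<lambda>k. complex_of_real (lam k)"] Bs by (simp add: Re_sum)
  finally have "(\<Sum>k<N. lam k * (cmod (inner (z k) w))\<^sup>2) = 0" by simp
  then have each: "\<forall>k\<in>{..<N}. lam k * (cmod (inner (z k) w))\<^sup>2 = 0"
    by (subst sum_nonneg_eq_0_iff[symmetric]) (use lam in auto)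
  have "B *\<^sub>v w = vec N (\<lambda>i. \<Sum>k<N. (complex_of_real (lam k) * inner (z k) w) * z k $ i)"
    unfolding Bs by (rule SS_mv[OF zc w])
  also have "\<dots> = 0\<^sub>v N"
  proof (rule eq_vecI)
    fix i assume "i < dim_vec (0\<^sub>v N)"
    have h: "\<And>k. k < N \<Longrightarrow> complex_of_real (lam k) * inner (z k) w = 0" using each by auto
    have "(\<Sum>k<N. (complex_of_real (lam k) * inner (z k) w) * z k $ i) = 0"
      by (rule sum.neutral) (use h in auto)
    then show "vec N (\<lambda>i. \<Sum>k<N. (complex_of_real (lam k) * inner (z k) w) * z k $ i) $ i = 0\<^sub>v N $ i"
      using \<open>i < dim_vec (0\<^sub>v N)\<close> by simp
  qed simp
  finally show ?thesis .
qed

lemma psd_unique: assumes p: "psd N B" and p': "psd N B'" and sq: "B * B = B' * B'"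
  shows "B = B'"
proof -
  note B = psdD[OF p] and B' = psdD[OF p']
  define H where "H = B - B'"
  have Hc: "H \<in> carrier_mat N N" using B B' by (simp add: H_def)
  have Hh: "hermitian H"
    unfolding hermitian_iff[OF Hc] using B(2) B'(2) B(1) B'(1)
    by (auto simp: H_def hermitian_iff[OF B(1)] hermitian_iff[OF B'(1)])
  obtain v mu where o: "ortho N N v" and Hs: "H = SS N N v (\<lambda>k. complex_of_real (mu k))"
    using spectral[OF Hc Hh] by auto
  have vc: "\<And>k. k < N \<Longrightarrow> v k \<in> carrier_vec N" using o by (simp add: ortho_def)
  have mu0: "mu k = 0" if k: "k < N" for k
  proof (rule ccontr)
    assume nz: "mu k \<noteq> 0"
    define w where "w = v k"
    have w: "w \<in> carrier_vec N" using vc[OF k] by (simp add: w_def)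
    have ww: "inner w w = 1" using orthoD(2)[OF o k k] by (simp add: w_def)
    define a where "a = B *\<^sub>v w"
    define b where "b = B' *\<^sub>v w"
    have ac: "a \<in> carrier_vec N" "b \<in> carrier_vec N" using B(1) B'(1) w by (auto simp: a_def b_def)
    have Hw: "H *\<^sub>v w = complex_of_real (mu k) \<cdot>\<^sub>v w" using SS_mv_basis[OF o k] Hs by (simp add: w_def)
    have amb: "a - b = complex_of_real (mu k) \<cdot>\<^sub>v w"
      using Hw B(1) B'(1) w by (simp add: H_def a_def b_def minus_mult_distrib_mat_vec)
    have "inner a a = inner w ((B * B) *\<^sub>v w)"
      using inner_adj[OF B(1) w ac(1)] hermitian_adj[OF B(2)] B(1) w by (simp add: a_def assoc_mult_mat_vec)
    moreover have "inner b b = inner w ((B' * B') *\<^sub>v w)"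
      using inner_adj[OF B'(1) w ac(2)] hermitian_adj[OF B'(2)] B'(1) w by (simp add: b_def assoc_mult_mat_vec)
    ultimately have "inner a a - inner b b = 0" using sq by simp
    moreover have "inner a a - inner b b = inner a (a - b) + inner (a - b) b"
      using ac by (simp add: inner_diff inner_diff_l)
    moreover have "inner a w = inner w a"
      using inner_adj[OF B(1) w w] hermitian_adj[OF B(2)] by (simp add: a_def)
    ultimately have "complex_of_real (mu k) * (inner w a + inner w b) = 0"
      unfolding amb using ac w by (simp add: inner_smult_r inner_smult_l distrib_left)
    then have sum0: "inner w a + inner w b = 0" using nz by simp
    have ra: "inner w a = complex_of_real (Re (inner w a))" unfolding a_def by (rule herm_inner_real[OF B(1) B(2) w])
    have rb: "inner w b = complex_of_real (Re (inner w b))" unfolding b_def by (rule herm_inner_real[OF B'(1) B'(2) w])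
    have pa: "Re (inner w a) \<ge> 0" using B(3)[OF w] by (simp add: a_def)
    have pb: "Re (inner w b) \<ge> 0" using B'(3)[OF w] by (simp add: b_def)
    have "Re (inner w a) + Re (inner w b) = 0" using arg_cong[OF sum0, of Re] by simp
    then have "Re (inner w a) = 0" "Re (inner w b) = 0" using pa pb by auto
    then have "inner w a = 0" "inner w b = 0" using ra rb by auto
    then have "a = 0\<^sub>v N" "b = 0\<^sub>v N" using psd_zero[OF p w] psd_zero[OF p' w] by (auto simp: a_def b_def)
    then have "complex_of_real (mu k) \<cdot>\<^sub>v w = 0\<^sub>v N" using amb by simp
    then have "inner w (complex_of_real (mu k) \<cdot>\<^sub>v w) = 0" using inner_zero_r[OF w] by simp
    then show False using inner_smult_r[OF w w] ww nz by simp
  qed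
  have "H = 0\<^sub>m N N" unfolding Hs by (rule eq_matI) (auto simp: mu0)
  show ?thesis
  proof (rule eq_matI)
    fix i j assume "i < dim_row B'" "j < dim_col B'"
    then have i: "i < N" and j: "j < N" using B'(1) by auto
    have "H $$ (i,j) = 0" using \<open>H = 0\<^sub>m N N\<close> i j by simp
    then show "B $$ (i,j) = B' $$ (i,j)" using i j B(1) B'(1) by (simp add: H_def)
  qed (use B(1) B'(1) in auto)
qed

lemma mat_abs_eq: assumes p: "psd N B" and sq: "B * B = adj A * A"
  shows "mat_abs N A = B"
  unfolding mat_abs_def
proof (rule the_equality)
  show "psd N B \<and> B * B = adj A * A" using p sq by simp
  fix C assume "psd N C \<and> C * C = adj A * A"
  then show "C = B" using psd_unique[of N C B] p sq by auto
qed



lemma mult_NN[simp]: "A \<in> carrier_mat N N \<Longrightarrow> B \<in> carrier_mat N N \<Longrightarrow> A * B \<in> carrier_mat N N"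
  by (rule mult_carrier_mat)

lemma mtrace_mult_idx: "P \<in> carrier_mat N N \<Longrightarrow> X \<in> carrier_mat N N \<Longrightarrow>
  mtrace (P * X) = (\<Sum>a<N. \<Sum>m<N. P $$ (a,m) * X $$ (m,a))"
  by (simp add: mtrace_carrier[of _ N] mm_idx)

lemma mtrace_comm: assumes "A \<in> carrier_mat N N" "B \<in> carrier_mat N N"
  shows "mtrace (A * B) = mtrace (B * A)"
proof -
  have "mtrace (A * B) = (\<Sum>a<N. \<Sum>m<N. A $$ (a,m) * B $$ (m,a))" using assms by (rule mtrace_mult_idx)
  also have "\<dots> = (\<Sum>m<N. \<Sum>a<N. B $$ (m,a) * A $$ (a,m))" by (subst sum.swap) (simp add: mult.commute)
  also have "\<dots> = mtrace (B * A)" using assms by (simp add: mtrace_mult_idx)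
  finally show ?thesis .
qed

lemma msum_mult_left: assumes A: "A \<in> carrier_mat N N" and f: "\<And>j. j \<in> J \<Longrightarrow> f j \<in> carrier_mat N N"
  and fin: "finite J"
  shows "A * msum N J f = msum N J (\<lambda>j. A * f j)"
proof (rule eq_matI)
  fix a b assume "a < dim_row (msum N J (\<lambda>j. A * f j))" "b < dim_col (msum N J (\<lambda>j. A * f j))"
  then have a: "a < N" and b: "b < N" by (auto simp: msum_def)
  have "(A * msum N J f) $$ (a,b) = (\<Sum>m<N. \<Sum>j\<in>J. A $$ (a,m) * f j $$ (m,b))"
    using A a b by (simp add: mm_idx sum_distrib_left)
  also have "\<dots> = (\<Sum>j\<in>J. \<Sum>m<N. A $$ (a,m) * f j $$ (m,b))" by (rule sum.swap)
  also have "\<dots> = msum N J (\<lambda>j. A * f j) $$ (a,b)"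
    using a b by (auto simp: mm_idx[OF A f] intro!: sum.cong)
  finally show "(A * msum N J f) $$ (a,b) = msum N J (\<lambda>j. A * f j) $$ (a,b)" .
qed (use A in \<open>auto simp: msum_def\<close>)

lemma msum_mult_right: assumes A: "A \<in> carrier_mat N N" and f: "\<And>j. j \<in> J \<Longrightarrow> f j \<in> carrier_mat N N"
  and fin: "finite J"
  shows "msum N J f * A = msum N J (\<lambda>j. f j * A)"
proof (rule eq_matI)
  fix a b assume "a < dim_row (msum N J (\<lambda>j. f j * A))" "b < dim_col (msum N J (\<lambda>j. f j * A))"
  then have a: "a < N" and b: "b < N" by (auto simp: msum_def)
  have "(msum N J f * A) $$ (a,b) = (\<Sum>m<N. \<Sum>j\<in>J. f j $$ (a,m) * A $$ (m,b))"
    using A a b by (simp add: mm_idx[OF msum_carrier A a b] sum_distrib_right)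
  also have "\<dots> = (\<Sum>j\<in>J. \<Sum>m<N. f j $$ (a,m) * A $$ (m,b))" by (rule sum.swap)
  also have "\<dots> = msum N J (\<lambda>j. f j * A) $$ (a,b)"
    using a b by (auto simp: mm_idx[OF f A] intro!: sum.cong)
  finally show "(msum N J f * A) $$ (a,b) = msum N J (\<lambda>j. f j * A) $$ (a,b)" .
qed (use A in \<open>auto simp: msum_def\<close>)

lemma mtrace_msum: assumes "\<And>j. j \<in> J \<Longrightarrow> f j \<in> carrier_mat N N"
  shows "mtrace (msum N J f) = (\<Sum>j\<in>J. mtrace (f j))"
proof -
  have "mtrace (msum N J f) = (\<Sum>a<N. \<Sum>j\<in>J. f j $$ (a,a))" by (simp add: mtrace_carrier[of _ N])
  also have "\<dots> = (\<Sum>j\<in>J. \<Sum>a<N. f j $$ (a,a))" by (rule sum.swap)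
  also have "\<dots> = (\<Sum>j\<in>J. mtrace (f j))" by (intro sum.cong refl) (simp add: mtrace_carrier[OF assms])
  finally show ?thesis .
qed

lemma adj_msum: assumes "\<And>j. j \<in> J \<Longrightarrow> f j \<in> carrier_mat N N"
  shows "adj (msum N J f) = msum N J (\<lambda>j. adj (f j))"
proof (rule eq_matI)
  fix a b assume "a < dim_row (msum N J (\<lambda>j. adj (f j)))" "b < dim_col (msum N J (\<lambda>j. adj (f j)))"
  then have a: "a < N" and b: "b < N" by (auto simp: msum_def)
  have "adj (msum N J f) $$ (a,b) = (\<Sum>j\<in>J. cnj (f j $$ (b,a)))" using a b by (simp add: msum_def cnj_sum)
  also have "\<dots> = msum N J (\<lambda>j. adj (f j)) $$ (a,b)"
  proof -
    have "\<And>j. j \<in> J \<Longrightarrow> cnj (f j $$ (b,a)) = adj (f j) $$ (a,b)"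
    proof -
      fix j assume "j \<in> J"
      then have "f j \<in> carrier_mat N N" by (rule assms)
      then show "cnj (f j $$ (b,a)) = adj (f j) $$ (a,b)" using a b by auto
    qed
    then show ?thesis using a b by (auto intro!: sum.cong)
  qed
  finally show "adj (msum N J f) $$ (a,b) = msum N J (\<lambda>j. adj (f j)) $$ (a,b)" .
qed (auto simp: msum_def)

lemma msum_swap: "msum N I (\<lambda>i. msum N J (\<lambda>j. f i j)) = msum N J (\<lambda>j. msum N I (\<lambda>i. f i j))"
  by (rule eq_matI) (auto simp: msum_def intro: sum.swap)

lemma msum_cong: "(\<And>j. j \<in> J \<Longrightarrow> f j = g j) \<Longrightarrow> msum N J f = msum N J g"
  by (simp add: msum_def)

lemma mtrace_minus: "A \<in> carrier_mat N N \<Longrightarrow> B \<in> carrier_mat N N \<Longrightarrow> mtrace (A - B) = mtrace A - mtrace B"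
  by (simp add: mtrace_carrier[of _ N] sum_subtractf)

definition Pm :: "nat \<Rightarrow> 'j set \<Rightarrow> ('j \<Rightarrow> complex mat) \<Rightarrow> ('o \<Rightarrow> complex mat) \<Rightarrow> 'o \<Rightarrow> complex mat" where
  "Pm N J E M i = msum N J (\<lambda>j. adj (M i * E j) * (M i * E j))"

context
  fixes N :: nat and J :: "'j set" and E :: "'j \<Rightarrow> complex mat" and Out :: "'o set" and M :: "'o \<Rightarrow> complex mat"
  assumes q: "qdm N J E Out M"
begin

lemma qE: "finite J" "\<And>j. j \<in> J \<Longrightarrow> E j \<in> carrier_mat N N" "msum N J (\<lambda>j. adj (E j) * E j) = 1\<^sub>m N"
  "finite Out" "\<And>i. i \<in> Out \<Longrightarrow> M i \<in> carrier_mat N N" "msum N Out (\<lambda>i. adj (M i) * M i) = 1\<^sub>m N"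
  using q by (auto simp: qdm_def)

lemma Pm_carrier[simp]: "Pm N J E M i \<in> carrier_mat N N" by (simp add: Pm_def)

lemma Pm_herm: "i \<in> Out \<Longrightarrow> hermitian (Pm N J E M i)"
proof -
  assume i: "i \<in> Out"
  have c: "\<And>j. j \<in> J \<Longrightarrow> M i * E j \<in> carrier_mat N N" using qE(2,5) i by simp
  have "adj (Pm N J E M i) = msum N J (\<lambda>j. adj (adj (M i * E j) * (M i * E j)))"
    unfolding Pm_def by (rule adj_msum) (use c in auto)
  also have "\<dots> = Pm N J E M i" unfolding Pm_def
    by (rule msum_cong) (simp add: adj_mult[OF adj_carrier[OF c] c] adj_adj)
  finally show ?thesis by (simp add: hermitian_def)
qed

lemma qdm_out_trace: assumes i: "i \<in> Out" and r: "\<rho> \<in> carrier_mat N N"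
  shows "qdm_out N J E M \<rho> i = Re (mtrace (Pm N J E M i * \<rho>))"
proof -
  have Mi: "M i \<in> carrier_mat N N" using qE(5) i .
  have Ej: "\<And>j. j \<in> J \<Longrightarrow> E j \<in> carrier_mat N N" by (rule qE(2))
  have "M i * superop N J E \<rho> * adj (M i) = msum N J (\<lambda>j. M i * (E j * \<rho> * adj (E j)) * adj (M i))"
  proof -
    have "M i * superop N J E \<rho> = msum N J (\<lambda>j. M i * (E j * \<rho> * adj (E j)))"
      unfolding superop_def by (rule msum_mult_left[OF Mi _ qE(1)]) (use Ej r in simp)
    then show ?thesis
      by (simp add: msum_mult_right[OF adj_carrier[OF Mi] _ qE(1)] Ej r Mi)
  qed
  then have "mtrace (M i * superop N J E \<rho> * adj (M i)) = (\<Sum>j\<in>J. mtrace (M i * (E j * \<rho> * adj (E j)) * adj (M i)))"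
    using mtrace_msum[of J "\<lambda>j. M i * (E j * \<rho> * adj (E j)) * adj (M i)" N] Ej r Mi by simp
  also have "\<dots> = (\<Sum>j\<in>J. mtrace (adj (M i * E j) * (M i * E j) * \<rho>))"
  proof (intro sum.cong refl)
    fix j assume j: "j \<in> J"
    note c = Ej[OF j] Mi r
    define G where "G = M i * E j"
    have G: "G \<in> carrier_mat N N" using c by (simp add: G_def)
    have "M i * (E j * \<rho> * adj (E j)) * adj (M i) = (G * \<rho>) * adj G"
      using c by (simp add: G_def adj_mult[of _ N N _ N] assoc_mult_mat[of _ N N _ N _ N])
    then have "mtrace (M i * (E j * \<rho> * adj (E j)) * adj (M i)) = mtrace (adj G * (G * \<rho>))"
      using mtrace_comm[of "G * \<rho>" N "adj G"] G c by simp
    also have "\<dots> = mtrace (adj (M i * E j) * (M i * E j) * \<rho>)"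
      using G c by (simp add: G_def assoc_mult_mat[of _ N N _ N _ N])
    finally show "mtrace (M i * (E j * \<rho> * adj (E j)) * adj (M i)) = mtrace (adj (M i * E j) * (M i * E j) * \<rho>)" .
  qed
  also have "\<dots> = mtrace (msum N J (\<lambda>j. adj (M i * E j) * (M i * E j) * \<rho>))"
    by (rule mtrace_msum[symmetric]) (use Ej r Mi in auto)
  also have "\<dots> = mtrace (Pm N J E M i * \<rho>)"
    unfolding Pm_def by (subst msum_mult_right[OF r _ qE(1)]) (use Ej Mi in auto)
  finally show ?thesis by (simp add: qdm_out_def)
qed

lemma Pm_sum: "msum N Out (Pm N J E M) = 1\<^sub>m N"
proof -
  have Ej: "\<And>j. j \<in> J \<Longrightarrow> E j \<in> carrier_mat N N" by (rule qE(2))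
  have Mi: "\<And>i. i \<in> Out \<Longrightarrow> M i \<in> carrier_mat N N" by (rule qE(5))
  have "msum N Out (Pm N J E M) = msum N J (\<lambda>j. msum N Out (\<lambda>i. adj (M i * E j) * (M i * E j)))"
    unfolding Pm_def by (rule msum_swap)
  also have "\<dots> = msum N J (\<lambda>j. adj (E j) * msum N Out (\<lambda>i. adj (M i) * M i) * E j)"
  proof (rule msum_cong)
    fix j assume j: "j \<in> J"
    have "msum N Out (\<lambda>i. adj (M i * E j) * (M i * E j)) = msum N Out (\<lambda>i. adj (E j) * (adj (M i) * M i) * E j)"
      by (rule msum_cong) (use Ej[OF j] Mi in \<open>simp add: adj_mult[of _ N N _ N] assoc_mult_mat[of _ N N _ N _ N]\<close>)
    also have "\<dots> = adj (E j) * msum N Out (\<lambda>i. adj (M i) * M i) * E j"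
      using Ej[OF j] Mi qE(4)
      by (simp add: msum_mult_left[of _ N] msum_mult_right[of _ N])
    finally show "msum N Out (\<lambda>i. adj (M i * E j) * (M i * E j)) = adj (E j) * msum N Out (\<lambda>i. adj (M i) * M i) * E j" .
  qed
  also have "\<dots> = msum N J (\<lambda>j. adj (E j) * E j)"
  proof (rule msum_cong)
    fix j assume j: "j \<in> J"
    have "adj (E j) \<in> carrier_mat N N" using Ej[OF j] by simp
    then show "adj (E j) * msum N Out (\<lambda>i. adj (M i) * M i) * E j = adj (E j) * E j"
      by (simp add: qE(6) right_mult_one_mat[of _ N N])
  qed
  also have "\<dots> = 1\<^sub>m N" by (rule qE(3))
  finally show ?thesis .
qed


lemma Pm_mv_carrier[simp]: "w \<in> carrier_vec N \<Longrightarrow> Pm N J E M i *\<^sub>v w \<in> carrier_vec N"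
  by (rule mult_mat_vec_carrier[OF Pm_carrier])

lemma qdm_out_sum: assumes r: "\<rho> \<in> carrier_mat N N"
  shows "(\<Sum>i\<in>Out. qdm_out N J E M \<rho> i) = Re (mtrace \<rho>)"
proof -
  have "(\<Sum>i\<in>Out. qdm_out N J E M \<rho> i) = Re (\<Sum>i\<in>Out. mtrace (Pm N J E M i * \<rho>))"
    by (simp add: qdm_out_trace[OF _ r] Re_sum)
  also have "(\<Sum>i\<in>Out. mtrace (Pm N J E M i * \<rho>)) = mtrace (msum N Out (\<lambda>i. Pm N J E M i * \<rho>))"
    by (rule mtrace_msum[symmetric]) (use r in simp)
  also have "msum N Out (\<lambda>i. Pm N J E M i * \<rho>) = msum N Out (Pm N J E M) * \<rho>"
    by (rule msum_mult_right[OF r _ qE(4), symmetric]) simp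
  also have "\<dots> = \<rho>" using r by (simp add: Pm_sum)
  finally show ?thesis .
qed

end



lemma proj_SS: "w \<in> carrier_vec N \<Longrightarrow> proj w = SS N 1 (\<lambda>_. w) (\<lambda>_. 1)"
  by (rule eq_matI) (auto simp: proj_def)

lemma proj_carrier[simp]: "w \<in> carrier_vec N \<Longrightarrow> proj w \<in> carrier_mat N N"
  by (simp add: proj_def)

lemma inner_trace_proj: assumes X: "X \<in> carrier_mat N N" and w: "w \<in> carrier_vec N"
  shows "mtrace (X * proj w) = inner w (X *\<^sub>v w)"
  using mtrace_mult_SS[OF X, of 1 "\<lambda>_. w" "\<lambda>_. 1"] w by (simp add: proj_SS[OF w])

lemma inner_msum: assumes w: "w \<in> carrier_vec N" and f: "\<And>i. i \<in> S \<Longrightarrow> f i \<in> carrier_mat N N"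
  and fin: "finite S"
  shows "inner w (msum N S f *\<^sub>v w) = (\<Sum>i\<in>S. inner w (f i *\<^sub>v w))"
proof -
  have "inner w (msum N S f *\<^sub>v w) = mtrace (msum N S f * proj w)" by (rule inner_trace_proj[OF msum_carrier w, symmetric])
  also have "msum N S f * proj w = msum N S (\<lambda>i. f i * proj w)"
    by (rule msum_mult_right[OF proj_carrier[OF w] f fin])
  also have "mtrace \<dots> = (\<Sum>i\<in>S. mtrace (f i * proj w))"
    by (rule mtrace_msum) (use f w in simp)
  also have "\<dots> = (\<Sum>i\<in>S. inner w (f i *\<^sub>v w))"
    by (intro sum.cong refl) (rule inner_trace_proj[OF f w])
  finally show ?thesis .
qed

lemma tv_max: assumes fin: "finite A" and z: "(\<Sum>i\<in>A. x i) = (0::real)"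
  shows "(\<Sum>i\<in>A. \<bar>x i\<bar>) / 2 = (\<Sum>i\<in>A. max (x i) 0)"
proof -
  have "(\<Sum>i\<in>A. \<bar>x i\<bar>) = (\<Sum>i\<in>A. 2 * max (x i) 0 - x i)" by (intro sum.cong refl) auto
  also have "\<dots> = 2 * (\<Sum>i\<in>A. max (x i) 0) - (\<Sum>i\<in>A. x i)" by (simp add: sum_subtractf sum_distrib_left)
  finally show ?thesis using z by simp
qed

lemma sum_le_max: assumes fin: "finite A" and S: "S \<subseteq> A"
  shows "(\<Sum>i\<in>S. x i) \<le> (\<Sum>i\<in>A. max (x i) (0::real))"
proof -
  have "(\<Sum>i\<in>S. x i) \<le> (\<Sum>i\<in>S. max (x i) 0)" by (rule sum_mono) simp
  also have "\<dots> \<le> (\<Sum>i\<in>A. max (x i) 0)" by (rule sum_mono2[OF fin S]) simp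
  finally show ?thesis .
qed

lemma sum_max_filter: "finite A \<Longrightarrow> (\<Sum>i\<in>A. max (x i) (0::real)) = (\<Sum>i\<in>{i\<in>A. x i > 0}. x i)"
  by (simp add: sum.inter_filter max_def) (intro sum.cong refl, auto)

lemma density_proj: assumes "is_unit_vec N \<psi>" shows "density N (proj \<psi>)"
proof -
  have w: "\<psi> \<in> carrier_vec N" and u: "inner \<psi> \<psi> = 1" using assms by (auto simp: is_unit_vec_def)
  have o: "ortho N 1 (\<lambda>_. \<psi>)" using w u by (simp add: ortho_def)
  have "psd N (SS N 1 (\<lambda>_. \<psi>) (\<lambda>_. complex_of_real 1))" by (rule SS_psd) (use w in auto)
  moreover have "mtrace (SS N 1 (\<lambda>_. \<psi>) (\<lambda>_. 1)) = 1" using mtrace_SS[OF o] by simp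
  ultimately show ?thesis by (simp add: density_def proj_SS[OF w])
qed

lemma smult_mv: assumes A: "A \<in> carrier_mat N N" and v: "v \<in> carrier_vec N"
  shows "(k \<cdot>\<^sub>m A) *\<^sub>v v = k \<cdot>\<^sub>v (A *\<^sub>v v)"
proof (rule eq_vecI)
  fix i assume "i < dim_vec (k \<cdot>\<^sub>v (A *\<^sub>v v))"
  then have i: "i < N" using A by simp
  have kA: "k \<cdot>\<^sub>m A \<in> carrier_mat N N" using A by simp
  show "((k \<cdot>\<^sub>m A) *\<^sub>v v) $ i = (k \<cdot>\<^sub>v (A *\<^sub>v v)) $ i"
    using A i by (simp add: mv_idx[OF kA v i] mv_idx[OF A v i] sum_distrib_left mult.assoc)
qed (use A in simp)

lemma density_mix: assumes X: "density N X" and Y: "density N Y" and e: "0 \<le> e" "e \<le> 1"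
  shows "density N (complex_of_real e \<cdot>\<^sub>m X + (1 - complex_of_real e) \<cdot>\<^sub>m Y)"
proof -
  note pX = psdD[OF conjunct1[OF X[unfolded density_def]]]
  note pY = psdD[OF conjunct1[OF Y[unfolded density_def]]]
  define Z where "Z = complex_of_real e \<cdot>\<^sub>m X + (1 - complex_of_real e) \<cdot>\<^sub>m Y"
  have Z: "Z \<in> carrier_mat N N" using pX pY by (simp add: Z_def)
  have hx: "\<And>i j. i < N \<Longrightarrow> j < N \<Longrightarrow> cnj (X $$ (j,i)) = X $$ (i,j)"
    using hermitian_iff[OF pX(1)] pX(2) by auto
  have hy: "\<And>i j. i < N \<Longrightarrow> j < N \<Longrightarrow> cnj (Y $$ (j,i)) = Y $$ (i,j)"
    using hermitian_iff[OF pY(1)] pY(2) by auto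
  have h: "hermitian Z"
    unfolding hermitian_iff[OF Z] using pX(1) pY(1) by (auto simp: Z_def hx hy)
  have ps: "0 \<le> Re (inner v (Z *\<^sub>v v))" if v: "v \<in> carrier_vec N" for v
  proof -
    have "Z *\<^sub>v v = complex_of_real e \<cdot>\<^sub>v (X *\<^sub>v v) + complex_of_real (1 - e) \<cdot>\<^sub>v (Y *\<^sub>v v)"
      using pX(1) pY(1) v by (simp add: Z_def add_mult_distrib_mat_vec[of _ N N] smult_mv)
    then have "inner v (Z *\<^sub>v v) = complex_of_real e * inner v (X *\<^sub>v v) + complex_of_real (1 - e) * inner v (Y *\<^sub>v v)"
      using pX(1) pY(1) v by (simp add: inner_add[OF v] inner_smult_r[OF v])
    then have "Re (inner v (Z *\<^sub>v v)) = e * Re (inner v (X *\<^sub>v v)) + (1 - e) * Re (inner v (Y *\<^sub>v v))"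
      by simp
    also have "\<dots> \<ge> 0" using pX(3)[OF v] pY(3)[OF v] e by simp
    finally show ?thesis .
  qed
  have "mtrace Z = complex_of_real e * mtrace X + (1 - complex_of_real e) * mtrace Y"
    using pX(1) pY(1) Z by (simp add: mtrace_carrier[of _ N] Z_def sum.distrib sum_distrib_left)
  then have "mtrace Z = 1" using X Y by (simp add: density_def)
  then show ?thesis using Z h ps by (simp add: density_def psd_def Z_def)
qed



lemma trace_dist_SS: assumes X: "X \<in> carrier_mat N N" and Y: "Y \<in> carrier_mat N N"
  and o: "ortho N n u" and eq: "X - Y = SS N n u (\<lambda>k. complex_of_real (lam k))"
  shows "trace_dist N X Y = (\<Sum>k<n. \<bar>lam k\<bar>) / 2"
proof -
  have uc: "\<And>k. k < n \<Longrightarrow> u k \<in> carrier_vec N" using o by (simp add: ortho_def)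
  have ps: "psd N (SS N n u (\<lambda>k. complex_of_real \<bar>lam k\<bar>))" by (rule SS_psd[OF uc]) auto
  have "SS N n u (\<lambda>k. complex_of_real \<bar>lam k\<bar>) * SS N n u (\<lambda>k. complex_of_real \<bar>lam k\<bar>)
      = SS N n u (\<lambda>k. complex_of_real \<bar>lam k\<bar> * complex_of_real \<bar>lam k\<bar>)" by (rule SS_mult[OF o])
  also have "(\<lambda>k. complex_of_real \<bar>lam k\<bar> * complex_of_real \<bar>lam k\<bar>) = (\<lambda>k. cnj (complex_of_real (lam k)) * complex_of_real (lam k))"
    by (rule ext) (simp flip: of_real_mult)
  also have "SS N n u \<dots> = adj (X - Y) * (X - Y)" unfolding eq adj_SS by (rule SS_mult[OF o, symmetric])
  finally have "mat_abs N (X - Y) = SS N n u (\<lambda>k. complex_of_real \<bar>lam k\<bar>)"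
    using mat_abs_eq[OF ps] by simp
  then show ?thesis unfolding trace_dist_def using mtrace_SS[OF o] by (simp add: Re_sum)
qed

lemma trace_dist_pair: assumes X: "X \<in> carrier_mat N N" and Y: "Y \<in> carrier_mat N N"
  and p: "is_unit_vec N \<psi>" and f: "is_unit_vec N \<phi>" and o: "inner \<psi> \<phi> = 0" and t: "0 \<le> t"
  and eq: "X - Y = complex_of_real t \<cdot>\<^sub>m (proj \<psi> - proj \<phi>)"
  shows "trace_dist N X Y = t"
proof -
  have pc: "\<psi> \<in> carrier_vec N" "inner \<psi> \<psi> = 1" using p by (auto simp: is_unit_vec_def)
  have fc: "\<phi> \<in> carrier_vec N" "inner \<phi> \<phi> = 1" using f by (auto simp: is_unit_vec_def)
  have o2: "inner \<phi> \<psi> = 0" using inner_swap[OF pc(1) fc(1)] o by simp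
  define u where "u k = (if k = 0 then \<psi> else \<phi>)" for k :: nat
  have ou: "ortho N 2 u" unfolding ortho_def u_def using pc fc o o2 by (auto simp: less_2_cases_iff)
  have "X - Y = SS N 2 u (\<lambda>k. complex_of_real (if k = 0 then t else - t))"
    unfolding eq by (rule eq_matI) (use pc fc in \<open>auto simp: u_def proj_def numeral_2_eq_2 lessThan_Suc algebra_simps\<close>)
  from trace_dist_SS[OF X Y ou this] show ?thesis using t by (simp add: numeral_2_eq_2 lessThan_Suc)
qed

lemma rayleigh: assumes o: "ortho N N u" and w: "w \<in> carrier_vec N" "inner w w = 1" and N: "0 < N"
  shows "Min (lam ` {..<N}) \<le> Re (inner w (SS N N u (\<lambda>k. complex_of_real (lam k)) *\<^sub>v w))"
    "Re (inner w (SS N N u (\<lambda>k. complex_of_real (lam k)) *\<^sub>v w)) \<le> Max (lam ` {..<N})"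
proof -
  have uc: "\<And>k. k < N \<Longrightarrow> u k \<in> carrier_vec N" using o by (simp add: ortho_def)
  define p where "p k = (cmod (inner (u k) w))\<^sup>2" for k
  have val: "Re (inner w (SS N N u (\<lambda>k. complex_of_real (lam k)) *\<^sub>v w)) = (\<Sum>k<N. lam k * p k)"
    using inner_SS[OF uc w(1), where c="\<lambda>k. complex_of_real (lam k)"] by (simp add: Re_sum p_def)
  have "inner w w = inner w (SS N N u (\<lambda>_. 1) *\<^sub>v w)" using w by (simp add: ortho_complete[OF o])
  also have "\<dots> = (\<Sum>k<N. 1 * complex_of_real (p k))" unfolding p_def by (rule inner_SS[OF uc w(1)])
  finally have "(\<Sum>k<N. 1 * complex_of_real (p k)) = 1" using w(2) by simp
  then have "complex_of_real (\<Sum>k<N. p k) = 1" by (simp add: of_real_sum)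
  then have ps: "(\<Sum>k<N. p k) = 1" using of_real_eq_1_iff by blast
  have pn: "\<And>k. p k \<ge> 0" by (simp add: p_def)
  have "(\<Sum>k<N. Min (lam ` {..<N}) * p k) \<le> (\<Sum>k<N. lam k * p k)"
    by (rule sum_mono) (use pn in \<open>auto intro!: mult_right_mono\<close>)
  then show "Min (lam ` {..<N}) \<le> Re (inner w (SS N N u (\<lambda>k. complex_of_real (lam k)) *\<^sub>v w))"
    using ps val by (simp add: sum_distrib_left[symmetric])
  have "(\<Sum>k<N. lam k * p k) \<le> (\<Sum>k<N. Max (lam ` {..<N}) * p k)"
    by (rule sum_mono) (use pn in \<open>auto intro!: mult_right_mono\<close>)
  then show "Re (inner w (SS N N u (\<lambda>k. complex_of_real (lam k)) *\<^sub>v w)) \<le> Max (lam ` {..<N})"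
    using ps val by (simp add: sum_distrib_left[symmetric])
qed



context
  fixes N :: nat and J :: "'j set" and E :: "'j \<Rightarrow> complex mat" and Out :: "'o set" and M :: "'o \<Rightarrow> complex mat"
  assumes q: "qdm N J E Out M"
begin

lemma qdm_out_diff: assumes r: "\<rho> \<in> carrier_mat N N" and s: "\<sigma> \<in> carrier_mat N N"
  and u: "\<And>k. k < n \<Longrightarrow> u k \<in> carrier_vec N" and eq: "\<rho> - \<sigma> = SS N n u (\<lambda>k. complex_of_real (lam k))"
  and i: "i \<in> Out"
  shows "qdm_out N J E M \<rho> i - qdm_out N J E M \<sigma> i = (\<Sum>k<n. lam k * Re (inner (u k) (Pm N J E M i *\<^sub>v u k)))"
proof -
  have P: "Pm N J E M i \<in> carrier_mat N N" by (rule Pm_carrier[OF q])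
  have "qdm_out N J E M \<rho> i - qdm_out N J E M \<sigma> i = Re (mtrace (Pm N J E M i * \<rho>) - mtrace (Pm N J E M i * \<sigma>))"
    using qdm_out_trace[OF q i r] qdm_out_trace[OF q i s] by simp
  also have "mtrace (Pm N J E M i * \<rho>) - mtrace (Pm N J E M i * \<sigma>) = mtrace (Pm N J E M i * (\<rho> - \<sigma>))"
    using P r s by (simp add: mult_minus_distrib_mat[of _ N N] mtrace_minus[of _ N])
  also have "\<dots> = (\<Sum>k<n. complex_of_real (lam k) * inner (u k) (Pm N J E M i *\<^sub>v u k))"
    unfolding eq by (rule mtrace_mult_SS[OF P u])
  finally show ?thesis by (simp add: Re_sum)
qed

lemma qdm_out_proj: assumes w: "w \<in> carrier_vec N" and i: "i \<in> Out"
  shows "qdm_out N J E M (proj w) i = Re (inner w (Pm N J E M i *\<^sub>v w))"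
  using qdm_out_trace[OF q i proj_carrier[OF w]] inner_trace_proj[OF Pm_carrier[OF q] w] by simp

lemma qdm_out_mix: assumes X: "X \<in> carrier_mat N N" and Y: "Y \<in> carrier_mat N N" and i: "i \<in> Out"
  shows "qdm_out N J E M (complex_of_real e \<cdot>\<^sub>m X + (1 - complex_of_real e) \<cdot>\<^sub>m Y) i
    = e * qdm_out N J E M X i + (1 - e) * qdm_out N J E M Y i"
proof -
  have Z: "complex_of_real e \<cdot>\<^sub>m X + (1 - complex_of_real e) \<cdot>\<^sub>m Y \<in> carrier_mat N N" using X Y by simp
  have P: "Pm N J E M i \<in> carrier_mat N N" by (rule Pm_carrier[OF q])
  have "mtrace (Pm N J E M i * (complex_of_real e \<cdot>\<^sub>m X + (1 - complex_of_real e) \<cdot>\<^sub>m Y))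
     = complex_of_real e * mtrace (Pm N J E M i * X) + (1 - complex_of_real e) * mtrace (Pm N J E M i * Y)"
    using X Y by (simp add: mtrace_mult_idx[OF P Z] mtrace_mult_idx[OF P X] mtrace_mult_idx[OF P Y]
        distrib_left sum.distrib sum_distrib_left mult_ac)
  then show ?thesis using qdm_out_trace[OF q i Z] qdm_out_trace[OF q i X] qdm_out_trace[OF q i Y] by simp
qed


lemma key: assumes N0: "0 < N"
  shows "\<exists>K0. K0 \<ge> 0 \<and>
    (\<forall>\<rho> \<sigma>. density N \<rho> \<longrightarrow> density N \<sigma> \<longrightarrow>
        tv_dist Out (qdm_out N J E M \<rho>) (qdm_out N J E M \<sigma>) \<le> K0 * trace_dist N \<rho> \<sigma>) \<and>
    (2 \<le> N \<longrightarrow> (\<exists>\<psi> \<phi>. is_unit_vec N \<psi> \<and> is_unit_vec N \<phi> \<and> inner \<psi> \<phi> = 0 \<and>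
        tv_dist Out (qdm_out N J E M (proj \<psi>)) (qdm_out N J E M (proj \<phi>)) = K0))"
proof -
  note finOut = qE(4)[OF q]
  define Q where "Q S = msum N S (Pm N J E M)" for S
  have Qc: "\<And>S. Q S \<in> carrier_mat N N" by (simp add: Q_def)
  have Qh: "hermitian (Q S)" if S: "S \<subseteq> Out" for S
  proof -
    have "adj (Q S) = msum N S (\<lambda>i. adj (Pm N J E M i))" unfolding Q_def
      by (rule adj_msum) (rule Pm_carrier[OF q])
    also have "\<dots> = Q S" unfolding Q_def
      by (rule msum_cong) (use Pm_herm[OF q] S in \<open>auto simp: hermitian_def\<close>)
    finally show ?thesis by (simp add: hermitian_def)
  qed
  have "\<forall>S\<in>Pow Out. \<exists>u. \<exists>lam. ortho N N u \<and> Q S = SS N N u (\<lambda>k. complex_of_real (lam k))"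
    using spectral[OF Qc Qh] by auto
  then obtain U where "\<forall>S\<in>Pow Out. \<exists>lam. ortho N N (U S) \<and> Q S = SS N N (U S) (\<lambda>k. complex_of_real (lam k))"
    by (rule bchoice[elim_format]) auto
  then obtain L where UL: "\<forall>S\<in>Pow Out. ortho N N (U S) \<and> Q S = SS N N (U S) (\<lambda>k. complex_of_real (L S k))"
    by (rule bchoice[elim_format]) auto
  define gap where "gap S = Max (L S ` {..<N}) - Min (L S ` {..<N})" for S
  define K0 where "K0 = Max (gap ` Pow Out)"
  have finP: "finite (Pow Out)" using finOut by simp
  have gap0: "gap S \<ge> 0" for S
  proof -
    have "Min (L S ` {..<N}) \<le> L S 0" by (rule Min_le) (use N0 in auto)
    also have "\<dots> \<le> Max (L S ` {..<N})" by (rule Max_ge) (use N0 in auto)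
    finally show ?thesis by (simp add: gap_def)
  qed
  have gapK: "gap S \<le> K0" if "S \<in> Pow Out" for S
    unfolding K0_def by (rule Max_ge) (use finP that in auto)
  have K0: "K0 \<ge> 0" using gapK[of "{}"] gap0[of "{}"] by simp
  have ray: "Min (L S ` {..<N}) \<le> Re (inner w (Q S *\<^sub>v w)) \<and> Re (inner w (Q S *\<^sub>v w)) \<le> Max (L S ` {..<N})"
    if S: "S \<in> Pow Out" and w: "w \<in> carrier_vec N" "inner w w = 1" for S w
    using rayleigh[OF conjunct1[OF UL[rule_format, OF S]] w N0, of "L S"] conjunct2[OF UL[rule_format, OF S]]
    by simp
  have Qinner: "inner w (Q S *\<^sub>v w) = (\<Sum>i\<in>S. inner w (Pm N J E M i *\<^sub>v w))"
    if S: "S \<subseteq> Out" and w: "w \<in> carrier_vec N" for S w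
    unfolding Q_def by (rule inner_msum[OF w Pm_carrier[OF q]]) (use S finOut in \<open>auto intro: finite_subset\<close>)
  have A: "tv_dist Out (qdm_out N J E M \<rho>) (qdm_out N J E M \<sigma>) \<le> K0 * trace_dist N \<rho> \<sigma>"
    if dr: "density N \<rho>" and ds: "density N \<sigma>" for \<rho> \<sigma>
  proof -
    note pr = psdD[OF conjunct1[OF dr[unfolded density_def]]]
    note ps = psdD[OF conjunct1[OF ds[unfolded density_def]]]
    have tr: "mtrace \<rho> = 1" "mtrace \<sigma> = 1" using dr ds by (auto simp: density_def)
    have Dc: "\<rho> - \<sigma> \<in> carrier_mat N N" using pr ps by simp
    have hr: "\<And>i j. i < N \<Longrightarrow> j < N \<Longrightarrow> cnj (\<rho> $$ (j,i)) = \<rho> $$ (i,j)"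
      using hermitian_iff[OF pr(1)] pr(2) by auto
    have hs: "\<And>i j. i < N \<Longrightarrow> j < N \<Longrightarrow> cnj (\<sigma> $$ (j,i)) = \<sigma> $$ (i,j)"
      using hermitian_iff[OF ps(1)] ps(2) by auto
    have Dh: "hermitian (\<rho> - \<sigma>)" unfolding hermitian_iff[OF Dc] using pr(1) ps(1) by (auto simp: hr hs)
    obtain u lam where o: "ortho N N u" and Ds: "\<rho> - \<sigma> = SS N N u (\<lambda>k. complex_of_real (lam k))"
      using spectral[OF Dc Dh] by auto
    have uc: "\<And>k. k < N \<Longrightarrow> u k \<in> carrier_vec N" and uu: "\<And>k. k < N \<Longrightarrow> inner (u k) (u k) = 1"
      using o by (auto simp: ortho_def)
    have D: "trace_dist N \<rho> \<sigma> = (\<Sum>k<N. \<bar>lam k\<bar>) / 2" by (rule trace_dist_SS[OF pr(1) ps(1) o Ds])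
    have "complex_of_real (\<Sum>k<N. lam k) = mtrace (\<rho> - \<sigma>)" unfolding Ds mtrace_SS[OF o] by (simp add: of_real_sum)
    also have "\<dots> = 0" using tr pr(1) ps(1) by (simp add: mtrace_minus)
    finally have "complex_of_real (\<Sum>k<N. lam k) = 0" .
    then have lam0: "(\<Sum>k<N. lam k) = 0" using of_real_eq_0_iff by blast
    have D2: "trace_dist N \<rho> \<sigma> = (\<Sum>k<N. max (lam k) 0)" unfolding D by (rule tv_max[OF _ lam0]) simp
    define x where "x i = qdm_out N J E M \<rho> i - qdm_out N J E M \<sigma> i" for i
    define g where "g i k = Re (inner (u k) (Pm N J E M i *\<^sub>v u k))" for i k
    have xg: "x i = (\<Sum>k<N. lam k * g i k)" if "i \<in> Out" for i
      unfolding x_def g_def by (rule qdm_out_diff[OF pr(1) ps(1) uc Ds that])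
    have x0: "(\<Sum>i\<in>Out. x i) = 0"
      unfolding x_def using qdm_out_sum[OF q pr(1)] qdm_out_sum[OF q ps(1)] tr by (simp add: sum_subtractf)
    define T where "T = {i\<in>Out. x i > 0}"
    have TO: "T \<subseteq> Out" "T \<in> Pow Out" by (auto simp: T_def)
    have "tv_dist Out (qdm_out N J E M \<rho>) (qdm_out N J E M \<sigma>) = (\<Sum>i\<in>Out. max (x i) 0)"
      unfolding tv_dist_def x_def[symmetric] by (rule tv_max[OF finOut x0])
    also have "\<dots> = (\<Sum>i\<in>T. x i)" unfolding T_def by (rule sum_max_filter[OF finOut])
    also have "\<dots> = (\<Sum>i\<in>T. \<Sum>k<N. lam k * g i k)" using TO by (intro sum.cong refl) (auto simp: xg)
    also have "\<dots> = (\<Sum>k<N. lam k * (\<Sum>i\<in>T. g i k))" by (subst sum.swap) (simp add: sum_distrib_left)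
    also have "\<dots> \<le> (\<Sum>k<N. max (lam k) 0 * gap T)"
    proof -
      define mn where "mn = Min (L T ` {..<N})"
      define mx where "mx = Max (L T ` {..<N})"
      have qk: "mn \<le> (\<Sum>i\<in>T. g i k) \<and> (\<Sum>i\<in>T. g i k) \<le> mx" if k: "k < N" for k
      proof -
        have "(\<Sum>i\<in>T. g i k) = Re (inner (u k) (Q T *\<^sub>v u k))"
          unfolding g_def Qinner[OF TO(1) uc[OF k]] by (simp add: Re_sum)
        then show ?thesis using ray[OF TO(2) uc[OF k] uu[OF k]] by (simp add: mn_def mx_def)
      qed
      have "(\<Sum>k<N. lam k * (\<Sum>i\<in>T. g i k)) = (\<Sum>k<N. lam k * ((\<Sum>i\<in>T. g i k) - mn))"
        using lam0 by (simp add: right_diff_distrib sum_subtractf sum_distrib_right[symmetric])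
      also have "\<dots> \<le> (\<Sum>k<N. max (lam k) 0 * gap T)"
      proof (rule sum_mono)
        fix k assume "k \<in> {..<N}"
        then have k: "k < N" by simp
        have a: "0 \<le> (\<Sum>i\<in>T. g i k) - mn" "(\<Sum>i\<in>T. g i k) - mn \<le> gap T"
          using qk[OF k] by (auto simp: gap_def mn_def mx_def)
        show "lam k * ((\<Sum>i\<in>T. g i k) - mn) \<le> max (lam k) 0 * gap T"
        proof (cases "lam k \<ge> 0")
          case True
          then show ?thesis using a by (simp add: max_def mult_left_mono)
        next
          case False
          then have "lam k * ((\<Sum>i\<in>T. g i k) - mn) \<le> 0" using a by (simp add: mult_nonpos_nonneg)
          then show ?thesis using False by (simp add: max_def)
        qed
      qed
      finally show ?thesis .
    qed
    also have "\<dots> = gap T * trace_dist N \<rho> \<sigma>" unfolding D2 by (simp add: sum_distrib_left mult.commute)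
    also have "\<dots> \<le> K0 * trace_dist N \<rho> \<sigma>"
      by (rule mult_right_mono[OF gapK[OF TO(2)]]) (simp add: D2 sum_nonneg)
    finally show ?thesis .
  qed
  have B: "\<exists>\<psi> \<phi>. is_unit_vec N \<psi> \<and> is_unit_vec N \<phi> \<and> inner \<psi> \<phi> = 0 \<and>
        tv_dist Out (qdm_out N J E M (proj \<psi>)) (qdm_out N J E M (proj \<phi>)) = K0" if N2: "2 \<le> N"
  proof -
    have "K0 \<in> gap ` Pow Out" unfolding K0_def by (rule Max_in) (use finP in auto)
    then obtain S0 where S0: "S0 \<in> Pow Out" and gS: "gap S0 = K0" by auto
    have S0O: "S0 \<subseteq> Out" using S0 by simp
    define u where "u = U S0"
    define lam where "lam = L S0"
    have o: "ortho N N u" and Qs: "Q S0 = SS N N u (\<lambda>k. complex_of_real (lam k))"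
      using UL S0 by (auto simp: u_def lam_def)
    have uc: "\<And>k. k < N \<Longrightarrow> u k \<in> carrier_vec N" and uu: "\<And>k l. k < N \<Longrightarrow> l < N \<Longrightarrow> inner (u k) (u l) = (if k = l then 1 else 0)"
      using o by (auto simp: ortho_def)
    have "Max (lam ` {..<N}) \<in> lam ` {..<N}" by (rule Max_in) (use N0 in auto)
    then obtain a where a: "a < N" "lam a = Max (lam ` {..<N})" by auto
    have "Min (lam ` {..<N}) \<in> lam ` {..<N}" by (rule Min_in) (use N0 in auto)
    then obtain b0 where b0: "b0 < N" "lam b0 = Min (lam ` {..<N})" by auto
    have mnmx: "Min (lam ` {..<N}) \<le> lam k \<and> lam k \<le> Max (lam ` {..<N})" if "k < N" for k
      using that by (auto intro: Min_le Max_ge)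
    obtain b where b: "b < N" "b \<noteq> a" "lam b = Min (lam ` {..<N})"
    proof (cases "b0 = a")
      case False then show ?thesis using that b0 by blast
    next
      case True
      define b where "b = (if a = 0 then 1 else (0::nat))"
      have bN: "b < N" "b \<noteq> a" using N2 by (auto simp: b_def)
      have "lam b = Min (lam ` {..<N})" using mnmx[OF bN(1)] True a b0 by simp
      then show ?thesis using that bN by blast
    qed
    define \<psi> where "\<psi> = u a"
    define \<phi> where "\<phi> = u b"
    have up: "is_unit_vec N \<psi>" "is_unit_vec N \<phi>" using uc uu a b by (auto simp: is_unit_vec_def \<psi>_def \<phi>_def)
    have pc: "\<psi> \<in> carrier_vec N" "\<phi> \<in> carrier_vec N" using up by (auto simp: is_unit_vec_def)
    have orth: "inner \<psi> \<phi> = 0" using uu[OF a(1) b(1)] b(2) by (simp add: \<psi>_def \<phi>_def)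
    define y where "y i = qdm_out N J E M (proj \<psi>) i - qdm_out N J E M (proj \<phi>) i" for i
    have dp: "density N (proj \<psi>)" "density N (proj \<phi>)" using density_proj up by auto
    have y0: "(\<Sum>i\<in>Out. y i) = 0"
      unfolding y_def using qdm_out_sum[OF q proj_carrier[OF pc(1)]] qdm_out_sum[OF q proj_carrier[OF pc(2)]] dp
      by (simp add: sum_subtractf density_def)
    have yv: "y i = Re (inner \<psi> (Pm N J E M i *\<^sub>v \<psi>)) - Re (inner \<phi> (Pm N J E M i *\<^sub>v \<phi>))" if "i \<in> Out" for i
      unfolding y_def using qdm_out_proj[OF pc(1) that] qdm_out_proj[OF pc(2) that] by simp
    have Qa: "Re (inner \<psi> (Q S0 *\<^sub>v \<psi>)) = lam a"
      using SS_mv_basis[OF o a(1), of "\<lambda>k. complex_of_real (lam k)"] inner_smult_r[OF uc[OF a(1)] uc[OF a(1)]] uu[OF a(1) a(1)]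
      by (simp add: Qs \<psi>_def)
    have Qb: "Re (inner \<phi> (Q S0 *\<^sub>v \<phi>)) = lam b"
      using SS_mv_basis[OF o b(1), of "\<lambda>k. complex_of_real (lam k)"] inner_smult_r[OF uc[OF b(1)] uc[OF b(1)]] uu[OF b(1) b(1)]
      by (simp add: Qs \<phi>_def)
    have "(\<Sum>i\<in>S0. y i) = Re (inner \<psi> (Q S0 *\<^sub>v \<psi>)) - Re (inner \<phi> (Q S0 *\<^sub>v \<phi>))"
      using S0O by (simp add: Qinner[OF S0O pc(1)] Qinner[OF S0O pc(2)] Re_sum yv subset_iff sum_subtractf cong: sum.cong)
    also have "\<dots> = K0" using Qa Qb a b gS by (simp add: gap_def lam_def)
    finally have yS: "(\<Sum>i\<in>S0. y i) = K0" .
    have tvy: "tv_dist Out (qdm_out N J E M (proj \<psi>)) (qdm_out N J E M (proj \<phi>)) = (\<Sum>i\<in>Out. max (y i) 0)"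
      unfolding tv_dist_def y_def[symmetric] by (rule tv_max[OF finOut y0])
    have ge: "K0 \<le> tv_dist Out (qdm_out N J E M (proj \<psi>)) (qdm_out N J E M (proj \<phi>))"
      unfolding tvy yS[symmetric] by (rule sum_le_max[OF finOut S0O])
    have D1: "trace_dist N (proj \<psi>) (proj \<phi>) = 1"
      by (rule trace_dist_pair[OF proj_carrier[OF pc(1)] proj_carrier[OF pc(2)] up orth]) (use pc in auto)
    have le: "tv_dist Out (qdm_out N J E M (proj \<psi>)) (qdm_out N J E M (proj \<phi>)) \<le> K0"
      using A[OF dp] D1 by simp
    show ?thesis using up orth ge le by (intro exI[of _ \<psi>] exI[of _ \<phi>]) simp
  qed
  show ?thesis using K0 A B by blast
qed

end



lemma dens_eq_small: assumes N: "N < 2" and r: "density N \<rho>" and s: "density N \<sigma>"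
  shows "\<rho> = \<sigma>"
proof -
  have rc: "\<rho> \<in> carrier_mat N N" "mtrace \<rho> = 1" and sc: "\<sigma> \<in> carrier_mat N N" "mtrace \<sigma> = 1"
    using r s by (auto simp: density_def psd_def)
  show ?thesis
  proof (cases "N = 0")
    case True
    then show ?thesis using rc by (simp add: mtrace_carrier[OF rc(1)])
  next
    case False
    then have N1: "N = 1" using N by simp
    have "\<rho> $$ (0,0) = 1" "\<sigma> $$ (0,0) = 1" using rc sc N1 by (auto simp: mtrace_carrier[of _ 1])
    then show ?thesis using rc(1) sc(1) N1 by (intro eq_matI) auto
  qed
qed

context
  fixes N :: nat and J :: "'j set" and E :: "'j \<Rightarrow> complex mat" and Out :: "'o set" and M :: "'o \<Rightarrow> complex mat"
  assumes q: "qdm N J E Out M"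
begin

lemma D_one: assumes "is_unit_vec N \<psi>" "is_unit_vec N \<phi>" "inner \<psi> \<phi> = 0"
  shows "trace_dist N (proj \<psi>) (proj \<phi>) = 1"
proof -
  have pc: "\<psi> \<in> carrier_vec N" "\<phi> \<in> carrier_vec N" using assms by (auto simp: is_unit_vec_def)
  show ?thesis by (rule trace_dist_pair[OF proj_carrier[OF pc(1)] proj_carrier[OF pc(2)] assms]) (use pc in auto)
qed

lemma mix_facts: assumes p: "is_unit_vec N \<psi>" and f: "is_unit_vec N \<phi>" and o: "inner \<psi> \<phi> = 0"
  and s: "density N \<sigma>" and e: "0 < e" "e \<le> 1"
  shows "density N (complex_of_real e \<cdot>\<^sub>m proj \<psi> + (1 - complex_of_real e) \<cdot>\<^sub>m \<sigma>)"
    "density N (complex_of_real e \<cdot>\<^sub>m proj \<phi> + (1 - complex_of_real e) \<cdot>\<^sub>m \<sigma>)"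
    "trace_dist N (complex_of_real e \<cdot>\<^sub>m proj \<psi> + (1 - complex_of_real e) \<cdot>\<^sub>m \<sigma>)
        (complex_of_real e \<cdot>\<^sub>m proj \<phi> + (1 - complex_of_real e) \<cdot>\<^sub>m \<sigma>) = e"
    "tv_dist Out (qdm_out N J E M (complex_of_real e \<cdot>\<^sub>m proj \<psi> + (1 - complex_of_real e) \<cdot>\<^sub>m \<sigma>))
        (qdm_out N J E M (complex_of_real e \<cdot>\<^sub>m proj \<phi> + (1 - complex_of_real e) \<cdot>\<^sub>m \<sigma>))
     = e * tv_dist Out (qdm_out N J E M (proj \<psi>)) (qdm_out N J E M (proj \<phi>))"
proof -
  have pc: "\<psi> \<in> carrier_vec N" "\<phi> \<in> carrier_vec N" using p f by (auto simp: is_unit_vec_def)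
  have sc: "\<sigma> \<in> carrier_mat N N" using s by (auto simp: density_def psd_def)
  show "density N (complex_of_real e \<cdot>\<^sub>m proj \<psi> + (1 - complex_of_real e) \<cdot>\<^sub>m \<sigma>)"
    by (rule density_mix[OF density_proj[OF p] s]) (use e in auto)
  show "density N (complex_of_real e \<cdot>\<^sub>m proj \<phi> + (1 - complex_of_real e) \<cdot>\<^sub>m \<sigma>)"
    by (rule density_mix[OF density_proj[OF f] s]) (use e in auto)
  show "trace_dist N (complex_of_real e \<cdot>\<^sub>m proj \<psi> + (1 - complex_of_real e) \<cdot>\<^sub>m \<sigma>)
        (complex_of_real e \<cdot>\<^sub>m proj \<phi> + (1 - complex_of_real e) \<cdot>\<^sub>m \<sigma>) = e"
  proof (rule trace_dist_pair[OF _ _ p f o])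
    show "complex_of_real e \<cdot>\<^sub>m proj \<psi> + (1 - complex_of_real e) \<cdot>\<^sub>m \<sigma> -
      (complex_of_real e \<cdot>\<^sub>m proj \<phi> + (1 - complex_of_real e) \<cdot>\<^sub>m \<sigma>) =
      complex_of_real e \<cdot>\<^sub>m (proj \<psi> - proj \<phi>)"
    proof (rule eq_matI)
      fix i j assume "i < dim_row (complex_of_real e \<cdot>\<^sub>m (proj \<psi> - proj \<phi>))"
        "j < dim_col (complex_of_real e \<cdot>\<^sub>m (proj \<psi> - proj \<phi>))"
      then have i: "i < N" and j: "j < N" using pc by (auto simp: proj_def)
      show "(complex_of_real e \<cdot>\<^sub>m proj \<psi> + (1 - complex_of_real e) \<cdot>\<^sub>m \<sigma> -
        (complex_of_real e \<cdot>\<^sub>m proj \<phi> + (1 - complex_of_real e) \<cdot>\<^sub>m \<sigma>)) $$ (i,j) =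
        (complex_of_real e \<cdot>\<^sub>m (proj \<psi> - proj \<phi>)) $$ (i,j)"
        using i j pc sc by (simp add: proj_def algebra_simps)
    qed (use pc sc in \<open>auto simp: proj_def\<close>)
  qed (use pc sc e in auto)
  have "(\<Sum>i\<in>Out. \<bar>qdm_out N J E M (complex_of_real e \<cdot>\<^sub>m proj \<psi> + (1 - complex_of_real e) \<cdot>\<^sub>m \<sigma>) i
      - qdm_out N J E M (complex_of_real e \<cdot>\<^sub>m proj \<phi> + (1 - complex_of_real e) \<cdot>\<^sub>m \<sigma>) i\<bar>)
    = (\<Sum>i\<in>Out. e * \<bar>qdm_out N J E M (proj \<psi>) i - qdm_out N J E M (proj \<phi>) i\<bar>)"
  proof (intro sum.cong refl)
    fix i assume i: "i \<in> Out"
    show "\<bar>qdm_out N J E M (complex_of_real e \<cdot>\<^sub>m proj \<psi> + (1 - complex_of_real e) \<cdot>\<^sub>m \<sigma>) i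
      - qdm_out N J E M (complex_of_real e \<cdot>\<^sub>m proj \<phi> + (1 - complex_of_real e) \<cdot>\<^sub>m \<sigma>) i\<bar>
      = e * \<bar>qdm_out N J E M (proj \<psi>) i - qdm_out N J E M (proj \<phi>) i\<bar>"
    proof -
      have "qdm_out N J E M (complex_of_real e \<cdot>\<^sub>m proj \<psi> + (1 - complex_of_real e) \<cdot>\<^sub>m \<sigma>) i
      - qdm_out N J E M (complex_of_real e \<cdot>\<^sub>m proj \<phi> + (1 - complex_of_real e) \<cdot>\<^sub>m \<sigma>) i
        = e * (qdm_out N J E M (proj \<psi>) i - qdm_out N J E M (proj \<phi>) i)"
        unfolding qdm_out_mix[OF q proj_carrier[OF pc(1)] sc i, of e] qdm_out_mix[OF q proj_carrier[OF pc(2)] sc i, of e]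
        by (simp add: algebra_simps)
      then show ?thesis using e by (simp add: abs_mult)
    qed
  qed
  then show "tv_dist Out (qdm_out N J E M (complex_of_real e \<cdot>\<^sub>m proj \<psi> + (1 - complex_of_real e) \<cdot>\<^sub>m \<sigma>))
        (qdm_out N J E M (complex_of_real e \<cdot>\<^sub>m proj \<phi> + (1 - complex_of_real e) \<cdot>\<^sub>m \<sigma>))
     = e * tv_dist Out (qdm_out N J E M (proj \<psi>)) (qdm_out N J E M (proj \<phi>))"
    unfolding tv_dist_def by (simp add: sum_distrib_left)
qed

end

theorem theorem1:
  fixes N :: nat and J :: "'j set" and E :: "'j \<Rightarrow> complex mat"
    and Out :: "'o set" and M :: "'o \<Rightarrow> complex mat" and \<epsilon> \<delta> :: real
  assumes "qdm N J E Out M"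
    and "0 < \<epsilon>" "\<epsilon> \<le> 1" "0 < \<delta>" "\<delta> \<le> 1"
  shows "(fair N J E Out M \<epsilon> \<delta> \<longleftrightarrow> \<delta> \<ge> lipschitz_const N J E Out M * \<epsilon>)
    \<and> (\<not> fair N J E Out M \<epsilon> \<delta> \<longrightarrow>
         (\<exists>\<psi> \<phi>. is_unit_vec N \<psi> \<and> is_unit_vec N \<phi> \<and> inner \<psi> \<phi> = 0 \<and>
            tv_dist Out (qdm_out N J E M (proj \<psi>)) (qdm_out N J E M (proj \<phi>))
              = lipschitz_const N J E Out M * trace_dist N (proj \<psi>) (proj \<phi>))
       \<and> (\<forall>\<psi> \<phi> \<sigma>. is_unit_vec N \<psi> \<longrightarrow> is_unit_vec N \<phi> \<longrightarrow> inner \<psi> \<phi> = 0 \<longrightarrow>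
            tv_dist Out (qdm_out N J E M (proj \<psi>)) (qdm_out N J E M (proj \<phi>))
              = lipschitz_const N J E Out M * trace_dist N (proj \<psi>) (proj \<phi>) \<longrightarrow>
            density N \<sigma> \<longrightarrow>
            bias_pair N J E Out M \<epsilon> \<delta>
              (\<epsilon> \<cdot>\<^sub>m proj \<psi> + (1 - \<epsilon>) \<cdot>\<^sub>m \<sigma>)
              (\<epsilon> \<cdot>\<^sub>m proj \<phi> + (1 - \<epsilon>) \<cdot>\<^sub>m \<sigma>)))"
proof -
  note q = assms(1)
  define tv where "tv \<rho> \<sigma> = tv_dist Out (qdm_out N J E M \<rho>) (qdm_out N J E M \<sigma>)" for \<rho> \<sigma>
  have tv0: "\<And>\<rho>. tv \<rho> \<rho> = 0" by (simp add: tv_def tv_dist_def)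
  consider (small) "N < 2" | (big) "2 \<le> N" by linarith
  then show ?thesis
  proof cases
    case small
    have eqd: "\<And>\<rho> \<sigma>. density N \<rho> \<Longrightarrow> density N \<sigma> \<Longrightarrow> \<rho> = \<sigma>" by (rule dens_eq_small[OF small])
    have K: "lipschitz_const N J E Out M = 0" unfolding lipschitz_const_def
    proof (rule Least_equality)
      show "0 \<le> (0::real) \<and> (\<forall>\<rho> \<sigma>. density N \<rho> \<longrightarrow> density N \<sigma> \<longrightarrow>
          tv_dist Out (qdm_out N J E M \<rho>) (qdm_out N J E M \<sigma>) \<le> 0 * trace_dist N \<rho> \<sigma>)"
      proof (intro conjI allI impI)
        fix \<rho> \<sigma> assume "density N \<rho>" "density N \<sigma>"
        then have "\<rho> = \<sigma>" by (rule eqd)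
        then show "tv_dist Out (qdm_out N J E M \<rho>) (qdm_out N J E M \<sigma>) \<le> 0 * trace_dist N \<rho> \<sigma>"
          using tv0 by (simp add: tv_def)
      qed simp
    qed auto
    have fair: "fair N J E Out M \<epsilon> \<delta>" unfolding fair_def
    proof
      assume "\<exists>\<rho> \<sigma>. bias_pair N J E Out M \<epsilon> \<delta> \<rho> \<sigma>"
      then obtain \<rho> \<sigma> where b: "density N \<rho>" "density N \<sigma>" "tv \<rho> \<sigma> > \<delta>"
        unfolding bias_pair_def tv_def by blast
      have "\<rho> = \<sigma>" using eqd b(1,2) .
      then show False using b(3) tv0 assms(4) by simp
    qed
    show ?thesis using fair K assms(4) by simp
  next
    case big
    obtain K0 where K0: "K0 \<ge> 0"
      and A: "\<And>\<rho> \<sigma>. density N \<rho> \<Longrightarrow> density N \<sigma> \<Longrightarrow> tv \<rho> \<sigma> \<le> K0 * trace_dist N \<rho> \<sigma>"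
      and B: "\<exists>\<psi> \<phi>. is_unit_vec N \<psi> \<and> is_unit_vec N \<phi> \<and> inner \<psi> \<phi> = 0 \<and> tv (proj \<psi>) (proj \<phi>) = K0"
      using key[OF q] big unfolding tv_def by force
    from B obtain \<psi>0 \<phi>0 where B0: "is_unit_vec N \<psi>0" "is_unit_vec N \<phi>0" "inner \<psi>0 \<phi>0 = 0" "tv (proj \<psi>0) (proj \<phi>0) = K0"
      by blast
    have K: "lipschitz_const N J E Out M = K0" unfolding lipschitz_const_def
    proof (rule Least_equality)
      show "0 \<le> K0 \<and> (\<forall>\<rho> \<sigma>. density N \<rho> \<longrightarrow> density N \<sigma> \<longrightarrow>
          tv_dist Out (qdm_out N J E M \<rho>) (qdm_out N J E M \<sigma>) \<le> K0 * trace_dist N \<rho> \<sigma>)"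
        using K0 A by (auto simp: tv_def)
      fix K assume "0 \<le> K \<and> (\<forall>\<rho> \<sigma>. density N \<rho> \<longrightarrow> density N \<sigma> \<longrightarrow>
          tv_dist Out (qdm_out N J E M \<rho>) (qdm_out N J E M \<sigma>) \<le> K * trace_dist N \<rho> \<sigma>)"
      then have "tv (proj \<psi>0) (proj \<phi>0) \<le> K * trace_dist N (proj \<psi>0) (proj \<phi>0)"
        using density_proj B0 by (auto simp: tv_def)
      then show "K0 \<le> K" using B0 D_one[OF q B0(1-3)] by simp
    qed
    have mixb: "bias_pair N J E Out M \<epsilon> \<delta> (complex_of_real \<epsilon> \<cdot>\<^sub>m proj \<psi> + (1 - complex_of_real \<epsilon>) \<cdot>\<^sub>m \<sigma>)
        (complex_of_real \<epsilon> \<cdot>\<^sub>m proj \<phi> + (1 - complex_of_real \<epsilon>) \<cdot>\<^sub>m \<sigma>)"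
      if p: "is_unit_vec N \<psi>" "is_unit_vec N \<phi>" "inner \<psi> \<phi> = 0" "tv (proj \<psi>) (proj \<phi>) = K0"
        and s: "density N \<sigma>" and lt: "\<delta> < K0 * \<epsilon>" for \<psi> \<phi> \<sigma>
    proof -
      note mf = mix_facts[OF q p(1-3) s assms(2,3)]
      have "tv_dist Out (qdm_out N J E M (complex_of_real \<epsilon> \<cdot>\<^sub>m proj \<psi> + (1 - complex_of_real \<epsilon>) \<cdot>\<^sub>m \<sigma>))
        (qdm_out N J E M (complex_of_real \<epsilon> \<cdot>\<^sub>m proj \<phi> + (1 - complex_of_real \<epsilon>) \<cdot>\<^sub>m \<sigma>)) = \<epsilon> * K0"
        using mf(4) p(4) by (simp add: tv_def)
      then show ?thesis unfolding bias_pair_def using mf(1-3) lt by (simp add: mult.commute)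
    qed
    have P1: "fair N J E Out M \<epsilon> \<delta> \<longleftrightarrow> \<delta> \<ge> K0 * \<epsilon>"
    proof
      assume fair: "fair N J E Out M \<epsilon> \<delta>"
      show "\<delta> \<ge> K0 * \<epsilon>"
      proof (rule ccontr)
        assume "\<not> \<delta> \<ge> K0 * \<epsilon>"
        then have "\<delta> < K0 * \<epsilon>" by simp
        from mixb[OF B0 density_proj[OF B0(2)] this] fair show False unfolding fair_def by blast
      qed
    next
      assume le: "\<delta> \<ge> K0 * \<epsilon>"
      show "fair N J E Out M \<epsilon> \<delta>" unfolding fair_def
      proof
        assume "\<exists>\<rho> \<sigma>. bias_pair N J E Out M \<epsilon> \<delta> \<rho> \<sigma>"
        then obtain \<rho> \<sigma> where b: "density N \<rho>" "density N \<sigma>" "trace_dist N \<rho> \<sigma> \<le> \<epsilon>" "tv \<rho> \<sigma> > \<delta>"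
          unfolding bias_pair_def tv_def by blast
        have "tv \<rho> \<sigma> \<le> K0 * trace_dist N \<rho> \<sigma>" by (rule A[OF b(1,2)])
        also have "\<dots> \<le> K0 * \<epsilon>" by (rule mult_left_mono[OF b(3) K0])
        finally show False using b(4) le by simp
      qed
    qed
    show ?thesis
    proof (intro conjI impI)
      show "fair N J E Out M \<epsilon> \<delta> \<longleftrightarrow> \<delta> \<ge> lipschitz_const N J E Out M * \<epsilon>" using P1 K by simp
      assume nf: "\<not> fair N J E Out M \<epsilon> \<delta>"
      then have lt: "\<delta> < K0 * \<epsilon>" using P1 by simp
      show "\<exists>\<psi> \<phi>. is_unit_vec N \<psi> \<and> is_unit_vec N \<phi> \<and> inner \<psi> \<phi> = 0 \<and>
            tv_dist Out (qdm_out N J E M (proj \<psi>)) (qdm_out N J E M (proj \<phi>))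
              = lipschitz_const N J E Out M * trace_dist N (proj \<psi>) (proj \<phi>)"
        using B0 D_one[OF q B0(1-3)] K by (intro exI[of _ \<psi>0] exI[of _ \<phi>0]) (simp add: tv_def)
      show "\<forall>\<psi> \<phi> \<sigma>. is_unit_vec N \<psi> \<longrightarrow> is_unit_vec N \<phi> \<longrightarrow> inner \<psi> \<phi> = 0 \<longrightarrow>
            tv_dist Out (qdm_out N J E M (proj \<psi>)) (qdm_out N J E M (proj \<phi>))
              = lipschitz_const N J E Out M * trace_dist N (proj \<psi>) (proj \<phi>) \<longrightarrow>
            density N \<sigma> \<longrightarrow>
            bias_pair N J E Out M \<epsilon> \<delta>
              (\<epsilon> \<cdot>\<^sub>m proj \<psi> + (1 - \<epsilon>) \<cdot>\<^sub>m \<sigma>)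
              (\<epsilon> \<cdot>\<^sub>m proj \<phi> + (1 - \<epsilon>) \<cdot>\<^sub>m \<sigma>)"
      proof (intro allI impI)
        fix \<psi> \<phi> \<sigma>
        assume p: "is_unit_vec N \<psi>" "is_unit_vec N \<phi>" "inner \<psi> \<phi> = 0"
          and eq: "tv_dist Out (qdm_out N J E M (proj \<psi>)) (qdm_out N J E M (proj \<phi>))
              = lipschitz_const N J E Out M * trace_dist N (proj \<psi>) (proj \<phi>)"
          and s: "density N \<sigma>"
        have "tv (proj \<psi>) (proj \<phi>) = K0" using eq K D_one[OF q p] by (simp add: tv_def)
        from mixb[OF p this s lt] show "bias_pair N J E Out M \<epsilon> \<delta>
              (\<epsilon> \<cdot>\<^sub>m proj \<psi> + (1 - \<epsilon>) \<cdot>\<^sub>m \<sigma>)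
              (\<epsilon> \<cdot>\<^sub>m proj \<phi> + (1 - \<epsilon>) \<cdot>\<^sub>m \<sigma>)" by (simp add: of_real_diff)
      qed
    qed
  qed
qed


end
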